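(* Let $\mathcal{T}$ be a finite tree with maximum degree $\Delta$, and $w:V(\mathcal{T})\to\mathbb{R}_{\ge0}$. Then $$\mathtt{cent}(\mathcal{T},w)\le\left(2-\frac{1}{2^{\Delta}}\right)\cdot\mathtt{OPT}(\mathcal{T},w).$$
   Context: For a subgraph $\mathcal{H}$ of $\mathcal{T}$, $w(\mathcal{H})=\sum_{x\in V(\mathcal{H})}w(x)$. A search tree on a tree $\mathcal{T}$ is a rooted tree $T$ with vertex set $V(\mathcal{T})$ defined recursively: its root is an arbitrary vertex $r$, and the children of $r$ are the roots of search trees built on the connected components of $\mathcal{T}-r$; a single-vertex tree has only itself as search tree. $\mathtt{cost}_w(T)=\sum_x w(x)\,\mathtt{depth}_T(x)$ with root depth $1$; $\mathtt{OPT}(\mathcal{T},w)$ is the minimum cost over all search trees on $\mathcal{T}$. A vertex $v$ is a centroid of $(\mathcal{T},w)$ if each component $\mathcal{H}$ of $\mathcal{T}-v$ has $w(\mathcal{H})\le w(\mathcal{T})/2$. A search tree $T$ is a centroid tree if each vertex $x$ is a centroid of $(\mathcal{T}[V(T_x)],w)$, $T_x$ being the subtree of $T$ rooted at $x$. $\mathtt{cent}(\mathcal{T},w)$ is the maximum cost of a centroid tree of $(\mathcal{T},w)$. *)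

theory Defs
  imports Complex_Main
begin

definition is_tree :: "'a set \<Rightarrow> ('a \<Rightarrow> 'a \<Rightarrow> bool) \<Rightarrow> bool" where
  "is_tree V E \<longleftrightarrow> finite V \<and> V \<noteq> {} \<and>
     (\<forall>u v. E u v \<longrightarrow> u \<in> V \<and> v \<in> V) \<and>
     (\<forall>u v. E u v \<longrightarrow> E v u) \<and> (\<forall>v. \<not> E v v) \<and>
     (\<forall>u\<in>V. \<forall>v\<in>V. (\<lambda>x y. E x y)\<^sup>*\<^sup>* u v) \<and>
     card {{u, v} | u v. E u v} = card V - 1"

definition max_degree :: "'a set \<Rightarrow> ('a \<Rightarrow> 'a \<Rightarrow> bool) \<Rightarrow> nat" where
  "max_degree V E = Max ((\<lambda>v. card {u \<in> V. E v u}) ` V)"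

definition reach :: "('a \<Rightarrow> 'a \<Rightarrow> bool) \<Rightarrow> 'a set \<Rightarrow> 'a \<Rightarrow> 'a \<Rightarrow> bool" where
  "reach E S = (\<lambda>x y. x \<in> S \<and> y \<in> S \<and> E x y)\<^sup>*\<^sup>*"

definition comps :: "('a \<Rightarrow> 'a \<Rightarrow> bool) \<Rightarrow> 'a set \<Rightarrow> 'a set set" where
  "comps E S = {{u \<in> S. reach E S v u} | v. v \<in> S}"

datatype 'a rtree = Node 'a "'a rtree list"

fun root :: "'a rtree \<Rightarrow> 'a" where
  "root (Node r ts) = r"

fun tset :: "'a rtree \<Rightarrow> 'a set" where
  "tset (Node r ts) = insert r (\<Union> (set (map tset ts)))"

fun subtrees :: "'a rtree \<Rightarrow> 'a rtree set" where
  "subtrees (Node r ts) = insert (Node r ts) (\<Union> (set (map subtrees ts)))"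

inductive search_tree :: "('a \<Rightarrow> 'a \<Rightarrow> bool) \<Rightarrow> 'a set \<Rightarrow> 'a rtree \<Rightarrow> bool" where
  "\<lbrakk> r \<in> S; distinct (map tset ts); set (map tset ts) = comps E (S - {r});
     \<forall>t\<in>set ts. search_tree E (tset t) t \<rbrakk> \<Longrightarrow> search_tree E S (Node r ts)"

text \<open>Cost with root at depth 1.\<close>
fun cost_at :: "('a \<Rightarrow> real) \<Rightarrow> nat \<Rightarrow> 'a rtree \<Rightarrow> real" where
  "cost_at w d (Node r ts) = w r * real d + sum_list (map (cost_at w (Suc d)) ts)"

definition cost :: "('a \<Rightarrow> real) \<Rightarrow> 'a rtree \<Rightarrow> real" where
  "cost w T = cost_at w 1 T"

definition OPT :: "'a set \<Rightarrow> ('a \<Rightarrow> 'a \<Rightarrow> bool) \<Rightarrow> ('a \<Rightarrow> real) \<Rightarrow> real" where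
  "OPT V E w = Min (cost w ` {T. search_tree E V T})"

definition is_centroid :: "('a \<Rightarrow> 'a \<Rightarrow> bool) \<Rightarrow> 'a set \<Rightarrow> ('a \<Rightarrow> real) \<Rightarrow> 'a \<Rightarrow> bool" where
  "is_centroid E S w v \<longleftrightarrow> v \<in> S \<and> (\<forall>C\<in>comps E (S - {v}). sum w C \<le> sum w S / 2)"

definition centroid_tree :: "'a set \<Rightarrow> ('a \<Rightarrow> 'a \<Rightarrow> bool) \<Rightarrow> ('a \<Rightarrow> real) \<Rightarrow> 'a rtree \<Rightarrow> bool" where
  "centroid_tree V E w T \<longleftrightarrow> search_tree E V T \<and>
     (\<forall>s\<in>subtrees T. is_centroid E (tset s) w (root s))"

definition cent :: "'a set \<Rightarrow> ('a \<Rightarrow> 'a \<Rightarrow> bool) \<Rightarrow> ('a \<Rightarrow> real) \<Rightarrow> real" where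
  "cent V E w = Max (cost w ` {T. centroid_tree V E w T})"

end

theory Submission
  imports Defs
begin


definition conn :: "('a \<Rightarrow> 'a \<Rightarrow> bool) \<Rightarrow> 'a set \<Rightarrow> bool" where
  "conn E U \<longleftrightarrow> (\<forall>x\<in>U. \<forall>y\<in>U. reach E U x y)"

lemma reach_mono: "S \<subseteq> S' \<Longrightarrow> reach E S x y \<Longrightarrow> reach E S' x y"
  unfolding reach_def by (erule rtranclp_mono[THEN predicate2D, rotated]) auto

lemma reach_trans: "reach E S x y \<Longrightarrow> reach E S y z \<Longrightarrow> reach E S x z"
  unfolding reach_def by auto

lemma reach_refl[simp]: "reach E S x x"
  unfolding reach_def by auto

lemma reach_step: "x \<in> S \<Longrightarrow> y \<in> S \<Longrightarrow> E x y \<Longrightarrow> reach E S x y"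
  unfolding reach_def by auto

lemma reach_sym:
  assumes sym: "\<forall>u v. E u v \<longrightarrow> E v u" and "reach E S x y" shows "reach E S y x"
  using assms(2) unfolding reach_def
proof (induction rule: rtranclp_induct)
  case base then show ?case by auto
next
  case (step y z)
  let ?R = "\<lambda>x y. x \<in> S \<and> y \<in> S \<and> E x y"
  have "?R z y" using sym step by auto
  from converse_rtranclp_into_rtranclp[of ?R, OF this step.IH] show ?case .
qed

lemma reach_induct[consumes 1, case_names base step]:
  assumes "reach E S x y" "P x"
    "\<And>y z. reach E S x y \<Longrightarrow> y \<in> S \<Longrightarrow> z \<in> S \<Longrightarrow> E y z \<Longrightarrow> P y \<Longrightarrow> P z"
  shows "P y"
  using assms(1) unfolding reach_def
proof (induction rule: rtranclp_induct)
  case base then show ?case using assms(2) by simp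
next
  case (step y z) then show ?case using assms(3)[of y z] unfolding reach_def by blast
qed

lemma reach_closed:
  assumes "reach E S x y" "x \<in> C" "\<forall>a\<in>C. \<forall>b\<in>S. E a b \<longrightarrow> b \<in> C"
  shows "y \<in> C"
  using assms(1) unfolding reach_def
proof (induction rule: rtranclp_induct)
  case base then show ?case using assms(2) by simp
next
  case (step y z) then show ?case using assms(3) by blast
qed

lemma reach_within:
  assumes "reach E S x y" "x \<in> C" "\<forall>a\<in>C. \<forall>b\<in>S. E a b \<longrightarrow> b \<in> C" "C \<subseteq> S"
  shows "reach E C x y"
  using assms(1) unfolding reach_def
proof (induction rule: rtranclp_induct)
  case base then show ?case by simp
next
  case (step z z')
  have "z \<in> C" using reach_closed[OF _ assms(2,3)] step(1) unfolding reach_def by blast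
  then have "z' \<in> C" using assms(3) step(2) by blast
  then show ?case using step \<open>z \<in> C\<close> by (simp add: rtranclp.rtrancl_into_rtrancl)
qed

lemma reach_in: "reach E S x y \<Longrightarrow> x \<in> S \<Longrightarrow> y \<in> S"
  using reach_closed[of E S x y S] by blast


locale sgraph =
  fixes E :: "'a \<Rightarrow> 'a \<Rightarrow> bool"
  assumes symE: "E u v \<Longrightarrow> E v u"
begin

lemma rsym: "reach E S x y \<Longrightarrow> reach E S y x"
  using reach_sym[of E S x y] symE by blast

lemma comps_char:
  "C \<in> comps E S \<longleftrightarrow> C \<subseteq> S \<and> C \<noteq> {} \<and> conn E C \<and> (\<forall>a\<in>C. \<forall>b\<in>S. E a b \<longrightarrow> b \<in> C)"
proof
  assume "C \<in> comps E S"
  then obtain v where v: "v \<in> S" and Cv: "C = {u \<in> S. reach E S v u}"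
    unfolding comps_def by auto
  have cl: "\<forall>a\<in>C. \<forall>b\<in>S. E a b \<longrightarrow> b \<in> C"
  proof (intro ballI impI)
    fix a b assume "a \<in> C" "b \<in> S" "E a b"
    have "a \<in> S" using \<open>a \<in> C\<close> Cv by simp
    have "reach E S v a" using \<open>a \<in> C\<close> Cv by simp
    moreover have "reach E S a b" by (rule reach_step) fact+
    ultimately have "reach E S v b" by (rule reach_trans)
    then show "b \<in> C" using Cv \<open>b \<in> S\<close> by simp
  qed
  have vC: "v \<in> C" using v Cv by simp
  have CS: "C \<subseteq> S" using Cv by auto
  have rv: "reach E C v u" if "u \<in> C" for u
  proof (rule reach_within[of E S v u C])
    show "reach E S v u" using that Cv by simp
  qed (fact vC, fact cl, fact CS)
  have "conn E C" unfolding conn_def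
  proof (intro ballI)
    fix x y assume "x \<in> C" "y \<in> C"
    have "reach E C x v" by (rule rsym, rule rv) fact
    moreover have "reach E C v y" by (rule rv) fact
    ultimately show "reach E C x y" by (rule reach_trans)
  qed
  then show "C \<subseteq> S \<and> C \<noteq> {} \<and> conn E C \<and> (\<forall>a\<in>C. \<forall>b\<in>S. E a b \<longrightarrow> b \<in> C)"
    using cl vC CS by blast
next
  assume H: "C \<subseteq> S \<and> C \<noteq> {} \<and> conn E C \<and> (\<forall>a\<in>C. \<forall>b\<in>S. E a b \<longrightarrow> b \<in> C)"
  then obtain v where v: "v \<in> C" by blast
  have Ceq: "C = {u \<in> S. reach E S v u}"
  proof
    show "C \<subseteq> {u \<in> S. reach E S v u}"
    proof
      fix u assume "u \<in> C"
      then have "reach E C v u" using H v unfolding conn_def by blast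
      moreover have "C \<subseteq> S" using H by blast
      ultimately have "reach E S v u" using reach_mono[of C S E v u] by blast
      moreover have "u \<in> S" using H \<open>u \<in> C\<close> by blast
      ultimately show "u \<in> {u \<in> S. reach E S v u}" by simp
    qed
    show "{u \<in> S. reach E S v u} \<subseteq> C"
    proof
      fix u assume "u \<in> {u \<in> S. reach E S v u}"
      then have "reach E S v u" by simp
      then show "u \<in> C" using reach_closed[of E S v u C] H v by blast
    qed
  qed
  have "v \<in> S" using H v by blast
  then show "C \<in> comps E S" unfolding comps_def using Ceq by blast
qed

lemma comps_sub: "C \<in> comps E S \<Longrightarrow> C \<subseteq> S"
  unfolding comps_char[of C S] by (elim conjE)
lemma comps_ne: "C \<in> comps E S \<Longrightarrow> C \<noteq> {}"
  unfolding comps_char[of C S] by (elim conjE)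
lemma comps_conn: "C \<in> comps E S \<Longrightarrow> conn E C"
  unfolding comps_char[of C S] by (elim conjE)
lemma comps_closed: "C \<in> comps E S \<Longrightarrow> a \<in> C \<Longrightarrow> b \<in> S \<Longrightarrow> E a b \<Longrightarrow> b \<in> C"
  unfolding comps_char[of C S] by blast

lemma comp_of0: "x \<in> S \<Longrightarrow> {u \<in> S. reach E S x u} \<in> comps E S"
  unfolding comps_def by auto

lemma comp_of: "x \<in> S \<Longrightarrow> \<exists>C\<in>comps E S. x \<in> C"
  by (rule bexI[of _ "{u \<in> S. reach E S x u}"]) (simp_all add: comp_of0)

lemma comps_Union: "\<Union>(comps E S) = S"
proof
  show "\<Union> (comps E S) \<subseteq> S" using comps_sub[of _ S] by blast
  show "S \<subseteq> \<Union> (comps E S)" using comp_of[of _ S] by blast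
qed

lemma conn_in_comp:
  assumes "conn E U" "U \<subseteq> S" "x \<in> U" "C \<in> comps E S" "x \<in> C"
  shows "U \<subseteq> C"
proof
  fix y assume "y \<in> U"
  then have "reach E U x y" using assms(1,3) unfolding conn_def by blast
  then have "reach E S x y" using reach_mono[OF assms(2)] by blast
  moreover have "\<forall>a\<in>C. \<forall>b\<in>S. E a b \<longrightarrow> b \<in> C" using comps_closed[OF assms(4)] by blast
  ultimately show "y \<in> C" using reach_closed[of E S x y C] assms(5) by blast
qed

lemma comps_disj: "C1 \<in> comps E S \<Longrightarrow> C2 \<in> comps E S \<Longrightarrow> x \<in> C1 \<Longrightarrow> x \<in> C2 \<Longrightarrow> C1 = C2"
  apply (rule subset_antisym)
   apply (rule conn_in_comp[of C1 S x C2]; simp add: comps_conn comps_sub)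
  apply (rule conn_in_comp[of C2 S x C1]; simp add: comps_conn comps_sub)
  done

lemma comps_disj': "C1 \<in> comps E S \<Longrightarrow> C2 \<in> comps E S \<Longrightarrow> C1 \<noteq> C2 \<Longrightarrow> C1 \<inter> C2 = {}"
  using comps_disj[of C1 S C2] by blast

lemma comps_restrict: "C \<in> comps E S \<Longrightarrow> C \<subseteq> S' \<Longrightarrow> S' \<subseteq> S \<Longrightarrow> C \<in> comps E S'"
proof -
  assume a: "C \<in> comps E S" "C \<subseteq> S'" "S' \<subseteq> S"
  have "\<forall>x\<in>C. \<forall>y\<in>S'. E x y \<longrightarrow> y \<in> C" using comps_closed[OF a(1)] a(3) by blast
  then show ?thesis unfolding comps_char[of C S'] using a comps_ne[OF a(1)] comps_conn[OF a(1)] by blast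
qed

lemma conn_sub_comp: "conn E U \<Longrightarrow> U \<subseteq> S \<Longrightarrow> U \<noteq> {} \<Longrightarrow> \<exists>C\<in>comps E S. U \<subseteq> C"
proof -
  assume a: "conn E U" "U \<subseteq> S" "U \<noteq> {}"
  then obtain x where x: "x \<in> U" by blast
  then have "x \<in> S" using a by blast
  then obtain C where C: "C \<in> comps E S" "x \<in> C" using comp_of[of x S] by blast
  show ?thesis using conn_in_comp[OF a(1,2) x C] C by blast
qed

lemma finite_comps: "finite S \<Longrightarrow> finite (comps E S)"
proof -
  assume "finite S"
  have "comps E S \<subseteq> Pow S" using comps_sub[of _ S] by blast
  then show ?thesis using \<open>finite S\<close> by (simp add: finite_subset)
qed

lemma comp_nbr:
  assumes "conn E U" "x \<in> U" "D \<in> comps E (U - {x})"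
  shows "\<exists>u\<in>D. E x u"
proof -
  obtain d where d: "d \<in> D" using comps_ne assms by blast
  have "d \<in> U" using d comps_sub[OF assms(3)] by blast
  then have "reach E U d x" using assms unfolding conn_def by blast
  have "z \<in> D \<or> (\<exists>u\<in>D. E u x)" if "reach E U d z" for z
    using that
  proof (induction rule: reach_induct)
    case base then show ?case using d by simp
  next
    case (step z z')
    show ?case
    proof (cases "z \<in> D \<and> z' \<noteq> x")
      case True
      then show ?thesis using step comps_closed[OF assms(3), of z z'] by blast
    next
      case False
      then show ?thesis using step by blast
    qed
  qed
  moreover have "x \<notin> D" using comps_sub[OF assms(3)] by blast
  ultimately obtain u where "u \<in> D" "E u x" using \<open>reach E U d x\<close> by blast
  then show ?thesis using symE by blast
qed

end


fun ancs :: "'a rtree \<Rightarrow> 'a \<Rightarrow> 'a set" where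
  "ancs (Node r ts) x = (if x \<in> tset (Node r ts) then insert r (\<Union> (set (map (\<lambda>t. ancs t x) ts))) else {})"

declare ancs.simps[simp del]

lemma finite_tset: "finite (tset T)"
  by (induction T) auto

lemma root_in_tset: "root T \<in> tset T"
  by (cases T) auto

lemma ancs_sub: "ancs T x \<subseteq> tset T"
proof (induction T)
  case (Node r ts)
  show ?case
  proof
    fix y assume y: "y \<in> ancs (Node r ts) x"
    show "y \<in> tset (Node r ts)"
    proof (cases "y = r")
      case True then show ?thesis by simp
    next
      case False
      then obtain t where "t \<in> set ts" "y \<in> ancs t x" using y by (auto simp: ancs.simps split: if_splits)
      then show ?thesis using Node by auto
    qed
  qed
qed

lemma finite_ancs: "finite (ancs T x)"
  using finite_subset[OF ancs_sub finite_tset] .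

lemma ancs_out: "x \<notin> tset T \<Longrightarrow> ancs T x = {}"
  by (cases T) (simp add: ancs.simps)

lemma ancs_root: "x \<in> tset T \<Longrightarrow> root T \<in> ancs T x"
  by (cases T) (simp add: ancs.simps)

lemma ancs_refl: "x \<in> tset T \<Longrightarrow> x \<in> ancs T x"
proof (induction T)
  case (Node r ts)
  show ?case
  proof (cases "x = r")
    case True then show ?thesis by (simp add: ancs.simps)
  next
    case False
    then obtain t where "t \<in> set ts" "x \<in> tset t" using Node.prems by auto
    then have "x \<in> ancs t x" using Node.IH by blast
    then show ?thesis using \<open>t \<in> set ts\<close> Node.prems by (auto simp: ancs.simps)
  qed
qed

lemma st_node:
  assumes "search_tree E S (Node r ts)"
  shows "r \<in> S" "distinct (map tset ts)" "set (map tset ts) = comps E (S - {r})"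
    "\<And>t. t \<in> set ts \<Longrightarrow> search_tree E (tset t) t"
  using assms by (cases rule: search_tree.cases; simp)+

context sgraph
begin

lemma st_induct[consumes 1, case_names node]:
  assumes "search_tree E S T"
    "\<And>r S ts. r \<in> S \<Longrightarrow> distinct (map tset ts) \<Longrightarrow> set (map tset ts) = comps E (S - {r}) \<Longrightarrow>
      (\<And>t. t \<in> set ts \<Longrightarrow> search_tree E (tset t) t) \<Longrightarrow> (\<And>t. t \<in> set ts \<Longrightarrow> P (tset t) t) \<Longrightarrow>
      P S (Node r ts)"
  shows "P S T"
  using assms(1)
proof (induction T arbitrary: S rule: rtree.induct)
  case (Node r ts)
  show ?case
  proof (rule assms(2))
    show "r \<in> S" "distinct (map tset ts)" "set (map tset ts) = comps E (S - {r})"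
      using st_node[OF Node.prems] by auto
    show "\<And>t. t \<in> set ts \<Longrightarrow> search_tree E (tset t) t" using st_node(4)[OF Node.prems] .
    then show "\<And>t. t \<in> set ts \<Longrightarrow> P (tset t) t" using Node.IH by blast
  qed
qed

lemma st_tset: "search_tree E S T \<Longrightarrow> tset T = S"
proof (induction rule: st_induct)
  case (node r S ts)
  have "\<Union> (set (map tset ts)) = S - {r}" using node(3) comps_Union[of "S - {r}"] by simp
  then show ?case using node(1,5) by auto
qed

lemma st_child_sub:
  assumes "search_tree E S (Node r ts)" "t \<in> set ts"
  shows "tset t \<in> comps E (S - {r})" "tset t \<subseteq> S - {r}"
proof -
  show "tset t \<in> comps E (S - {r})" using st_node(3)[OF assms(1)] assms(2) by auto
  then show "tset t \<subseteq> S - {r}" using comps_sub by blast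
qed

lemma st_child_disj:
  assumes "search_tree E S (Node r ts)" "t1 \<in> set ts" "t2 \<in> set ts" "t1 \<noteq> t2"
  shows "tset t1 \<inter> tset t2 = {}"
proof -
  have "inj_on tset (set ts)" using st_node(2)[OF assms(1)] by (simp add: distinct_map)
  then have "tset t1 \<noteq> tset t2" using assms(2-4) by (meson inj_on_def)
  then show ?thesis using comps_disj'[OF st_child_sub(1)[OF assms(1,2)] st_child_sub(1)[OF assms(1,3)]] by blast
qed

lemma ancs_child:
  assumes "search_tree E S (Node r ts)" "t \<in> set ts" "x \<in> tset t"
  shows "ancs (Node r ts) x = insert r (ancs t x)"
proof -
  have o: "ancs t' x = {}" if "t' \<in> set ts" "t' \<noteq> t" for t'
    using st_child_disj[OF assms(1) that(1) assms(2) that(2)] assms(3) ancs_out[of x t'] by blast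
  have "\<Union> (set (map (\<lambda>t. ancs t x) ts)) = ancs t x"
    using o assms(2) by auto
  then show ?thesis using assms(2,3) by (auto simp: ancs.simps)
qed

lemma ancs_rootnode:
  assumes "search_tree E S (Node r ts)"
  shows "ancs (Node r ts) r = {r}"
proof -
  have "ancs t r = {}" if "t \<in> set ts" for t
    using st_child_sub(2)[OF assms that] ancs_out[of r t] by blast
  then show ?thesis by (auto simp: ancs.simps)
qed

lemma card_ancs_child:
  assumes "search_tree E S (Node r ts)" "t \<in> set ts" "x \<in> tset t"
  shows "card (ancs (Node r ts) x) = Suc (card (ancs t x))"
proof -
  have "r \<notin> ancs t x" using ancs_sub[of t x] st_child_sub(2)[OF assms(1,2)] by blast
  then show ?thesis using ancs_child[OF assms] by (simp add: card_insert_disjoint finite_ancs)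
qed

lemma st_distinct_children: "search_tree E S (Node r ts) \<Longrightarrow> distinct ts"
proof -
  assume "search_tree E S (Node r ts)"
  from st_node(2)[OF this] show ?thesis by (simp add: distinct_map)
qed

lemma cost_formula:
  "search_tree E S T \<Longrightarrow> cost_at w d T = (\<Sum>x\<in>S. w x * (real d - 1 + real (card (ancs T x))))"
proof (induction arbitrary: d rule: st_induct)
  case (node r S ts)
  let ?T = "Node r ts"
  have st: "search_tree E S ?T" using node by (intro search_tree.intros) auto
  let ?f = "\<lambda>x. w x * (real d - 1 + real (card (ancs ?T x)))"
  have dist: "distinct ts" using st_distinct_children[OF st] .
  have IH: "cost_at w (Suc d) t = (\<Sum>x\<in>tset t. ?f x)" if "t \<in> set ts" for t
  proof -
    have "cost_at w (Suc d) t = (\<Sum>x\<in>tset t. w x * (real (Suc d) - 1 + real (card (ancs t x))))"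
      using node(5) that by blast
    also have "\<dots> = (\<Sum>x\<in>tset t. ?f x)"
      by (rule sum.cong) (auto simp: card_ancs_child[OF st that])
    finally show ?thesis .
  qed
  have "cost_at w d ?T = w r * real d + (\<Sum>t\<in>set ts. cost_at w (Suc d) t)"
    using dist by (simp add: sum_list_distinct_conv_sum_set)
  also have "\<dots> = w r * real d + (\<Sum>t\<in>set ts. \<Sum>x\<in>tset t. ?f x)"
    using IH by simp
  also have "(\<Sum>t\<in>set ts. \<Sum>x\<in>tset t. ?f x) = (\<Sum>x\<in>\<Union>(tset ` set ts). ?f x)"
    by (rule sum.UNION_disjoint[symmetric]) (use st_child_disj[OF st] in \<open>auto simp: finite_tset\<close>)
  also have "\<Union>(tset ` set ts) = S - {r}"
    using node(3) comps_Union[of "S - {r}"] by simp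
  also have "w r * real d = ?f r" using ancs_rootnode[OF st] by simp
  also have "?f r + (\<Sum>x\<in>S - {r}. ?f x) = (\<Sum>x\<in>S. ?f x)"
  proof -
    have fS: "finite S" using finite_tset[of ?T] unfolding st_tset[OF st] .
    show ?thesis by (simp add: sum.remove[OF fS node(1)])
  qed
  finally show ?case .
qed

lemma cost_eq_ancs:
  "search_tree E S T \<Longrightarrow> cost w T = (\<Sum>x\<in>S. w x * real (card (ancs T x)))"
  unfolding cost_def using cost_formula[of S T w 1] by simp

lemma cost_node:
  assumes st: "search_tree E S (Node c cs)"
  shows "cost w (Node c cs) = sum w S + (\<Sum>t\<in>set cs. cost w t)"
proof -
  have dist: "distinct cs" using st_distinct_children[OF st] .
  have c2: "cost_at w 2 t = sum w (tset t) + cost w t" if "t \<in> set cs" for t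
  proof -
    have stt: "search_tree E (tset t) t" using st_node(4)[OF st that] .
    have "cost_at w 2 t = (\<Sum>x\<in>tset t. w x * (1 + real (card (ancs t x))))"
      using cost_formula[OF stt, of w 2] by simp
    also have "\<dots> = sum w (tset t) + (\<Sum>x\<in>tset t. w x * real (card (ancs t x)))"
      by (simp add: distrib_left sum.distrib)
    finally show ?thesis using cost_eq_ancs[OF stt, of w] by simp
  qed
  have "cost w (Node c cs) = w c + (\<Sum>t\<in>set cs. cost_at w 2 t)"
    unfolding cost_def using dist by (simp add: sum_list_distinct_conv_sum_set numeral_2_eq_2)
  also have "\<dots> = w c + (\<Sum>t\<in>set cs. sum w (tset t)) + (\<Sum>t\<in>set cs. cost w t)"
    using c2 by (simp add: sum.distrib)
  also have "(\<Sum>t\<in>set cs. sum w (tset t)) = sum w (\<Union>(tset ` set cs))"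
    by (rule sum.UNION_disjoint[symmetric]) (use st_child_disj[OF st] in \<open>auto simp: finite_tset\<close>)
  also have "\<Union>(tset ` set cs) = S - {c}"
    using st_node(3)[OF st] comps_Union[of "S - {c}"] by simp
  also have "w c + sum w (S - {c}) = sum w S"
  proof -
    have fS: "finite S" using finite_tset[of "Node c cs"] unfolding st_tset[OF st] .
    show ?thesis by (simp add: sum.remove[OF fS st_node(1)[OF st]])
  qed
  finally show ?thesis .
qed

lemma topmost:
  "search_tree E S T \<Longrightarrow> conn E U \<Longrightarrow> U \<subseteq> S \<Longrightarrow> U \<noteq> {} \<Longrightarrow> \<exists>\<rho>\<in>U. \<forall>x\<in>U. \<rho> \<in> ancs T x"
proof (induction arbitrary: U rule: st_induct)
  case (node r S ts)
  let ?T = "Node r ts"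
  have st: "search_tree E S ?T" using node(1-4) by (intro search_tree.intros) auto
  show ?case
  proof (cases "r \<in> U")
    case True
    have "r \<in> ancs ?T x" if "x \<in> U" for x
    proof -
      have "x \<in> tset ?T" using that node.prems(2) st_tset[OF st] by blast
      then show ?thesis using ancs_root[of x ?T] by simp
    qed
    then show ?thesis using True by blast
  next
    case False
    then have "U \<subseteq> S - {r}" using node.prems(2) by blast
    then obtain C where C: "C \<in> comps E (S - {r})" "U \<subseteq> C" using conn_sub_comp[OF node.prems(1) _ node.prems(3)] by blast
    then obtain t where t: "t \<in> set ts" "tset t = C" using node(3) by (metis imageE list.set_map)
    then obtain \<rho> where \<rho>: "\<rho> \<in> U" "\<forall>x\<in>U. \<rho> \<in> ancs t x"
      using node(5)[OF t(1) node.prems(1) _ node.prems(3)] C(2) by blast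
    have "\<rho> \<in> ancs ?T x" if "x \<in> U" for x
      using ancs_child[OF st t(1)] \<rho> that C(2) t(2) by blast
    then show ?thesis using \<rho>(1) by blast
  qed
qed

end


definition aa :: "nat \<Rightarrow> real" where "aa e = 2 - 1 / 2 ^ e"

lemma aa_ge1: "aa e \<ge> 1"
  unfolding aa_def by (simp add: field_simps)

lemma aa_mono: "e \<le> e' \<Longrightarrow> aa e \<le> aa e'"
  unfolding aa_def by (simp add: field_simps power_increasing)

lemma aa_rec: "e \<ge> 1 \<Longrightarrow> aa e = 1 + aa (e - 1) / 2"
proof -
  assume "e \<ge> 1"
  then obtain k where k: "e = Suc k" by (cases e) auto
  show ?thesis unfolding aa_def k by (simp add: field_simps)
qed

locale cproblem = sgraph E for E :: "'a \<Rightarrow> 'a \<Rightarrow> bool" +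
  fixes V :: "'a set" and w :: "'a \<Rightarrow> real" and T :: "'a rtree" and D :: nat
  assumes finV: "finite V"
    and wpos: "x \<in> V \<Longrightarrow> w x \<ge> 0"
    and stT: "search_tree E V T"
    and deg: "v \<in> V \<Longrightarrow> card {u \<in> V. E v u} \<le> D"
begin

definition pc :: "'a set \<Rightarrow> real" where
  "pc U = (\<Sum>x\<in>U. w x * real (card {y \<in> U. y \<in> ancs T x}))"

lemma sumw_nonneg: "U \<subseteq> V \<Longrightarrow> sum w U \<ge> 0"
  using wpos by (meson subsetD sum_nonneg)

lemma sumw_mono: "A \<subseteq> B \<Longrightarrow> B \<subseteq> V \<Longrightarrow> sum w A \<le> sum w B"
  by (rule sum_mono2) (use finV finite_subset wpos in auto)

lemma tsetT: "tset T = V" using st_tset[OF stT] .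

lemma pc_split:
  assumes UV: "U \<subseteq> V" and \<rho>U: "\<rho> \<in> U" and anc: "\<forall>x\<in>U. \<rho> \<in> ancs T x"
    and finPs: "finite Ps" and PsU: "\<forall>P\<in>Ps. P \<subseteq> U"
    and disj: "\<forall>P\<in>Ps. \<forall>Q\<in>Ps. P \<noteq> Q \<longrightarrow> P \<inter> Q = {}"
    and P0: "\<forall>P\<in>Ps. \<rho> \<in> P \<longrightarrow> P \<subseteq> P0"
  shows "(\<Sum>P\<in>Ps. pc P) + sum w (U - P0) \<le> pc U"
proof -
  have finU: "finite U" using UV finV finite_subset by blast
  define n where "n P x = real (card {y \<in> P. y \<in> ancs T x})" for P x
  define g where "g x = (\<Sum>P\<in>Ps. if x \<in> P then n P x else 0) + (if x \<notin> P0 then 1 else 0)" for x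
  have e1: "pc P = (\<Sum>x\<in>U. if x \<in> P then w x * n P x else 0)" if "P \<in> Ps" for P
  proof -
    have "P \<subseteq> U" using PsU that by blast
    then have "U \<inter> P = P" by blast
    then show ?thesis unfolding pc_def n_def using sum.inter_restrict[OF finU, of "\<lambda>x. w x * real (card {y \<in> P. y \<in> ancs T x})" P]
      by simp
  qed
  have "(\<Sum>P\<in>Ps. pc P) = (\<Sum>P\<in>Ps. \<Sum>x\<in>U. if x \<in> P then w x * n P x else 0)"
    using e1 by simp
  also have "\<dots> = (\<Sum>x\<in>U. \<Sum>P\<in>Ps. if x \<in> P then w x * n P x else 0)"
    by (rule sum.swap)
  finally have s1: "(\<Sum>P\<in>Ps. pc P) = (\<Sum>x\<in>U. w x * (\<Sum>P\<in>Ps. if x \<in> P then n P x else 0))"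
    by (simp add: sum_distrib_left if_distrib cong: if_cong)
  have s2: "sum w (U - P0) = (\<Sum>x\<in>U. w x * (if x \<notin> P0 then 1 else 0))"
  proof -
    have "U \<inter> (- P0) = U - P0" by blast
    then show ?thesis using sum.inter_restrict[OF finU, of w "- P0"] by (simp add: if_distrib cong: if_cong)
  qed
  have pt: "g x \<le> n U x" if xU: "x \<in> U" for x
  proof -
    have xV: "x \<in> V" using xU UV by blast
    have finA: "finite {y \<in> U. y \<in> ancs T x}" using finU by simp
    show ?thesis
    proof (cases "\<exists>P1\<in>Ps. x \<in> P1")
      case True
      then obtain P1 where P1: "P1 \<in> Ps" "x \<in> P1" by blast
      have z: "(if x \<in> P then n P x else 0) = 0" if "P \<in> Ps - {P1}" for P
        using disj P1 that by auto
      have "(\<Sum>P\<in>Ps. if x \<in> P then n P x else 0) = n P1 x + (\<Sum>P\<in>Ps - {P1}. if x \<in> P then n P x else 0)"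
        using sum.remove[OF finPs P1(1), of "\<lambda>P. if x \<in> P then n P x else 0"] P1(2) by simp
      also have "(\<Sum>P\<in>Ps - {P1}. if x \<in> P then n P x else 0) = 0"
        using z by simp
      finally have gx: "g x = n P1 x + (if x \<notin> P0 then 1 else 0)" unfolding g_def by simp
      have P1U: "P1 \<subseteq> U" using PsU P1 by blast
      show ?thesis
      proof (cases "x \<in> P0")
        case True
        have "card {y \<in> P1. y \<in> ancs T x} \<le> card {y \<in> U. y \<in> ancs T x}"
          by (rule card_mono[OF finA]) (use P1U in blast)
        then show ?thesis using gx True unfolding n_def by simp
      next
        case False
        then have "\<not> P1 \<subseteq> P0" using P1 by blast
        then have "\<rho> \<notin> P1" using P0 P1 by blast
        have "insert \<rho> {y \<in> P1. y \<in> ancs T x} \<subseteq> {y \<in> U. y \<in> ancs T x}"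
          using P1U \<rho>U anc xU by blast
        then have "card (insert \<rho> {y \<in> P1. y \<in> ancs T x}) \<le> card {y \<in> U. y \<in> ancs T x}"
          by (rule card_mono[OF finA])
        moreover have "card (insert \<rho> {y \<in> P1. y \<in> ancs T x}) = Suc (card {y \<in> P1. y \<in> ancs T x})"
          using \<open>\<rho> \<notin> P1\<close> finite_subset[OF _ finU, of P1] P1U by (simp add: card_insert_disjoint)
        ultimately show ?thesis using gx False unfolding n_def by simp
      qed
    next
      case False
      then have "(\<Sum>P\<in>Ps. if x \<in> P then n P x else 0) = 0" by simp
      then have "g x \<le> 1" unfolding g_def by simp
      moreover have "x \<in> {y \<in> U. y \<in> ancs T x}" using xU ancs_refl[of x T] xV tsetT by simp
      then have "card {y \<in> U. y \<in> ancs T x} \<ge> 1"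
        using finA by (metis One_nat_def Suc_leI card_gt_0_iff empty_iff)
      ultimately show ?thesis unfolding n_def by simp
    qed
  qed
  have "(\<Sum>P\<in>Ps. pc P) + sum w (U - P0) = (\<Sum>x\<in>U. w x * g x)"
    unfolding s1 s2 g_def by (simp add: sum.distrib distrib_left)
  also have "\<dots> \<le> (\<Sum>x\<in>U. w x * n U x)"
    by (rule sum_mono) (use pt wpos UV in \<open>auto intro: mult_left_mono\<close>)
  also have "\<dots> = pc U" unfolding pc_def n_def by simp
  finally show ?thesis .
qed

lemma pc_nonneg: "U \<subseteq> V \<Longrightarrow> pc U \<ge> 0"
  unfolding pc_def using wpos by (auto intro!: sum_nonneg)

lemma degree:
  assumes "conn E U" "U \<subseteq> V" "\<rho> \<in> U"
  shows "card (comps E (U - {\<rho>})) \<le> D"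
proof -
  let ?Cs = "comps E (U - {\<rho>})"
  have "\<forall>B\<in>?Cs. \<exists>u\<in>B. E \<rho> u" using comp_nbr[OF assms(1,3)] by blast
  then obtain f where f: "\<forall>B\<in>?Cs. f B \<in> B \<and> E \<rho> (f B)" by metis
  have inj: "inj_on f ?Cs"
  proof (rule inj_onI)
    fix B1 B2 assume "B1 \<in> ?Cs" "B2 \<in> ?Cs" "f B1 = f B2"
    then show "B1 = B2" using comps_disj[of B1 "U - {\<rho>}" B2 "f B1"] f by metis
  qed
  have "f ` ?Cs \<subseteq> {u \<in> V. E \<rho> u}"
    using f comps_sub[of _ "U - {\<rho>}"] assms(2) by blast
  then have "card (f ` ?Cs) \<le> card {u \<in> V. E \<rho> u}"
    by (rule card_mono[rotated]) (use finV in simp)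
  then have "card ?Cs \<le> card {u \<in> V. E \<rho> u}" using card_image[OF inj] by simp
  also have "\<dots> \<le> D" using deg assms by blast
  finally show ?thesis .
qed

end


locale splitc = sgraph E for E :: "'a \<Rightarrow> 'a \<Rightarrow> bool" +
  fixes U r c B0 U'
  assumes connU: "conn E U" and rU: "r \<in> U" and cU: "c \<in> U" and cr: "c \<noteq> r"
    and B0: "B0 \<in> comps E (U - {r})" and cB0: "c \<in> B0"
    and U': "U' \<in> comps E (U - {c})" and rU': "r \<in> U'"
begin

definition "Bs = comps E (U - {r})"
definition "RS = comps E (U - {c}) - {U'}"
definition "Q = comps E (U' - {r}) - comps E (U - {r})"

lemma U'sub: "U' \<subseteq> U - {c}" using comps_sub[OF U'] .
lemma B0sub: "B0 \<subseteq> U - {r}" using comps_sub[OF B0] .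
lemma cU': "c \<notin> U'" using U'sub by blast

lemma RS_facts:
  assumes R: "R \<in> RS"
  shows "R \<subseteq> B0 - {c}" "R \<inter> U' = {}" "R \<in> comps E (U - {c})"
proof -
  show RC: "R \<in> comps E (U - {c})" using R unfolding RS_def by blast
  have "R \<noteq> U'" using R unfolding RS_def by blast
  then show RU': "R \<inter> U' = {}" using comps_disj'[OF RC U'] by blast
  have Rsub: "R \<subseteq> U - {c}" using comps_sub[OF RC] .
  have "r \<notin> R" using RU' rU' by blast
  then have Rsub2: "R \<subseteq> U - {r}" using Rsub by blast
  obtain B where B: "B \<in> comps E (U - {r})" "R \<subseteq> B"
    using conn_sub_comp[OF comps_conn[OF RC] Rsub2 comps_ne[OF RC]] by blast
  obtain y where y: "y \<in> R" "E c y" using comp_nbr[OF connU cU RC] by blast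
  have "y \<in> U - {r}" using y(1) Rsub2 by blast
  then have "y \<in> B0" using comps_closed[OF B0 cB0 _ y(2)] by blast
  then have "B = B0" using comps_disj[OF B(1) B0, of y] B(2) y(1) by blast
  then show "R \<subseteq> B0 - {c}" using B(2) Rsub by blast
qed

lemma Bs_other:
  assumes B: "B \<in> Bs" "B \<noteq> B0"
  shows "B \<subseteq> U'" "B \<in> comps E (U' - {r})"
proof -
  have BC: "B \<in> comps E (U - {r})" using B unfolding Bs_def by blast
  have "B \<inter> B0 = {}" using comps_disj'[OF BC B0 B(2)] .
  then have "c \<notin> B" using cB0 by blast
  then have Bsub: "B \<subseteq> U - {c}" using comps_sub[OF BC] by blast
  obtain K where K: "K \<in> comps E (U - {c})" "B \<subseteq> K"
    using conn_sub_comp[OF comps_conn[OF BC] Bsub comps_ne[OF BC]] by blast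
  obtain y where y: "y \<in> B" "E r y" using comp_nbr[OF connU rU BC] by blast
  have "E y r" using symE[OF y(2)] .
  have "r \<in> U - {c}" using rU cr by blast
  then have "r \<in> K" using comps_closed[OF K(1) _ _ \<open>E y r\<close>] K(2) y(1) by blast
  then have "K = U'" using comps_disj[OF K(1) U' , of r] rU' by blast
  then show BU': "B \<subseteq> U'" using K(2) by blast
  have "r \<notin> B" using comps_sub[OF BC] by blast
  then have "B \<subseteq> U' - {r}" using BU' by blast
  moreover have "U' - {r} \<subseteq> U - {r}" using U'sub by blast
  ultimately show "B \<in> comps E (U' - {r})" using comps_restrict[OF BC] by blast
qed

lemma Q_facts:
  assumes DQ: "D \<in> Q"
  shows "D \<subseteq> B0 - {c}" "D \<subseteq> U'" "D \<in> comps E (U' - {r})" "D \<notin> Bs"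
proof -
  show DC: "D \<in> comps E (U' - {r})" and nB: "D \<notin> Bs" using DQ unfolding Q_def Bs_def by blast+
  have Dsub: "D \<subseteq> U' - {r}" using comps_sub[OF DC] .
  then show "D \<subseteq> U'" by blast
  have Dsub2: "D \<subseteq> U - {r}" using Dsub U'sub by blast
  obtain B where B: "B \<in> comps E (U - {r})" "D \<subseteq> B"
    using conn_sub_comp[OF comps_conn[OF DC] Dsub2 comps_ne[OF DC]] by blast
  have "B = B0"
  proof (rule ccontr)
    assume "B \<noteq> B0"
    then have BC': "B \<in> comps E (U' - {r})" using Bs_other(2)[of B] B(1) unfolding Bs_def by blast
    obtain x where "x \<in> D" using comps_ne[OF DC] by blast
    then have "D = B" using comps_disj[OF DC BC', of x] B(2) by blast
    then show False using nB B(1) unfolding Bs_def by blast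
  qed
  then show "D \<subseteq> B0 - {c}" using B(2) Dsub U'sub by blast
qed

lemma comps_U'_eq: "comps E (U' - {r}) = (Bs - {B0}) \<union> Q"
proof
  show "(Bs - {B0}) \<union> Q \<subseteq> comps E (U' - {r})"
    using Bs_other(2) Q_facts(3) by blast
  show "comps E (U' - {r}) \<subseteq> (Bs - {B0}) \<union> Q"
  proof
    fix X assume X: "X \<in> comps E (U' - {r})"
    show "X \<in> (Bs - {B0}) \<union> Q"
    proof (cases "X \<in> Bs")
      case True
      have "c \<notin> X" using comps_sub[OF X] cU' by blast
      then have "X \<noteq> B0" using cB0 by blast
      then show ?thesis using True by blast
    next
      case False then show ?thesis using X unfolding Q_def Bs_def by blast
    qed
  qed
qed

lemma Q_Bs_disj: "Q \<inter> Bs = {}" using Q_facts(4) by blast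

lemma Q_RS_disj: "Q \<inter> RS = {}"
proof -
  have "X \<notin> RS" if "X \<in> Q" for X
  proof
    assume "X \<in> RS"
    then have "X \<inter> U' = {}" using RS_facts(2) by blast
    moreover have "X \<subseteq> U'" using Q_facts(2)[OF that] .
    moreover have "X \<noteq> {}" using comps_ne[OF Q_facts(3)[OF that]] .
    ultimately show False by blast
  qed
  then show ?thesis by blast
qed

lemma QRS_disj: "\<forall>P\<in>Q \<union> RS. \<forall>P'\<in>Q \<union> RS. P \<noteq> P' \<longrightarrow> P \<inter> P' = {}"
proof (intro ballI impI)
  fix P P' assume P: "P \<in> Q \<union> RS" and P': "P' \<in> Q \<union> RS" and ne: "P \<noteq> P'"
  show "P \<inter> P' = {}"
  proof (cases "P \<in> Q")
    case True
    show ?thesis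
    proof (cases "P' \<in> Q")
      case True
      show ?thesis using comps_disj'[OF Q_facts(3)[OF \<open>P \<in> Q\<close>] Q_facts(3)[OF True] ne] .
    next
      case False
      then have "P' \<in> RS" using P' by blast
      then show ?thesis using RS_facts(2)[of P'] Q_facts(2)[OF True] by blast
    qed
  next
    case False
    then have PR: "P \<in> RS" using P by blast
    show ?thesis
    proof (cases "P' \<in> Q")
      case True
      then show ?thesis using RS_facts(2)[OF PR] Q_facts(2)[OF True] by blast
    next
      case False
      then have "P' \<in> RS" using P' by blast
      then show ?thesis using comps_disj'[OF RS_facts(3)[OF PR] RS_facts(3)] ne by blast
    qed
  qed
qed

lemma QRS_sub: "\<forall>P\<in>Q \<union> RS. P \<subseteq> B0 - {c}"
  using Q_facts(1) RS_facts(1) by blast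

lemma finite_Q: "finite U \<Longrightarrow> finite Q"
  unfolding Q_def using finite_comps[of "U' - {r}"] U'sub finite_subset by blast

lemma finite_RS: "finite U \<Longrightarrow> finite RS"
  unfolding RS_def using finite_comps[of "U - {c}"] by blast

lemma comps_c: "comps E (U - {c}) = insert U' RS"
  unfolding RS_def using U' by blast

end


lemma arithA:
  fixes W W' X X' a al PB SQ SR pB0 cst :: real
  assumes "X' \<le> X - (W - W')" "SQ + SR \<le> pB0" "2*W' \<le> W" "1 \<le> a" "0 \<le> W" "0 \<le> al"
    "cst \<le> W + (a*(W' + X') + al*(PB + SQ)) + al*SR"
  shows "cst \<le> a*(W + X) + al*(pB0 + PB)"
proof -
  have 1: "a*X' \<le> a*(X - (W - W'))" using assms(1,4) by (intro mult_left_mono) auto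
  have 2: "al*(SQ + SR) \<le> al*pB0" using assms(2,6) by (intro mult_left_mono) auto
  have 3: "a*(2*W') \<le> a*W" using assms(3,4) by (intro mult_left_mono) auto
  have 4: "W \<le> a*W" using assms(4,5) by (metis mult_le_cancel_right1 order.strict_iff_not)
  show ?thesis using assms(7) 1 2 3 4 by (simp add: algebra_simps)
qed

lemma arithB:
  fixes W W' X X' a al PB SQ SR pB0 cst sv SQ' :: real
  assumes "X' = X + SQ'" "SQ + SR + sv \<le> pB0" "sv \<ge> (W - W') + SQ'" "a \<le> al" "(W - W') + SQ' \<ge> 0"
    "2*W' \<le> W" "1 \<le> a" "0 \<le> W" "0 \<le> al"
    "cst \<le> W + (a*(W' + X') + al*(PB + SQ)) + al*SR"
  shows "cst \<le> a*(W + X) + al*(pB0 + PB)"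
proof -
  have 1: "al*(SQ + SR + sv) \<le> al*pB0" using assms(2,9) by (intro mult_left_mono) auto
  have 2: "al*((W - W') + SQ') \<le> al*sv" using assms(3,9) by (intro mult_left_mono) auto
  have 7: "a*((W - W') + SQ') \<le> al*((W - W') + SQ')" using assms(4,5) by (intro mult_right_mono) auto
  have 3: "a*(2*W') \<le> a*W" using assms(6,7) by (intro mult_left_mono) auto
  have 4: "W \<le> a*W" using assms(7,8) by (metis mult_le_cancel_right1 order.strict_iff_not)
  show ?thesis using assms(1,10) 1 2 7 3 4 by (simp add: algebra_simps)
qed

lemma arithC:
  fixes W W' X X' a a' al PB SQ SR pB0 cst sv SQw :: real
  assumes "X' = X + SQw" "SQ + SR + sv \<le> pB0" "sv \<ge> SQw" "a' \<le> al" "a = 1 + a'/2" "a' \<le> a"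
    "2*W' \<le> W" "0 \<le> SQw" "0 \<le> X" "0 \<le> W" "0 \<le> a'" "0 \<le> al"
    "cst \<le> W + (a'*(W' + X') + al*(PB + SQ)) + al*SR"
  shows "cst \<le> a*(W + X) + al*(pB0 + PB)"
proof -
  have 1: "al*(SQ + SR + sv) \<le> al*pB0" using assms(2,12) by (intro mult_left_mono) auto
  have 2: "al*SQw \<le> al*sv" using assms(3,12) by (intro mult_left_mono) auto
  have 7: "a'*SQw \<le> al*SQw" using assms(4,8) by (intro mult_right_mono) auto
  have 3: "a'*(2*W') \<le> a'*W" using assms(7,11) by (intro mult_left_mono) auto
  have 4: "a'*X \<le> a*X" using assms(6,9) by (intro mult_right_mono) auto
  have 5: "a*W = W + a'*W/2" using assms(5) by (simp add: algebra_simps)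
  show ?thesis using assms(1,13) 1 2 7 3 4 5 by (simp add: algebra_simps)
qed


context cproblem
begin

definition ClaimP :: "'a set \<Rightarrow> bool" where
  "ClaimP U \<longleftrightarrow> (\<forall>r F e C. r \<in> U \<longrightarrow> F \<subseteq> comps E (U - {r}) \<longrightarrow> card (comps E (U - {r}) - F) \<le> e
     \<longrightarrow> e \<le> D \<longrightarrow> centroid_tree U E w C \<longrightarrow>
     cost w C \<le> aa e * (sum w U + (\<Sum>B\<in>F. sum w B)) + aa D * (\<Sum>B\<in>comps E (U - {r}). pc B))"

definition BaseP :: "'a set \<Rightarrow> bool" where
  "BaseP U \<longleftrightarrow> (\<forall>C. centroid_tree U E w C \<longrightarrow> cost w C \<le> aa D * pc U)"

lemma ClaimPD:
  assumes "ClaimP U" "r \<in> U" "F \<subseteq> comps E (U - {r})" "card (comps E (U - {r}) - F) \<le> e"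
    "e \<le> D" "centroid_tree U E w C"
  shows "cost w C \<le> aa e * (sum w U + (\<Sum>B\<in>F. sum w B)) + aa D * (\<Sum>B\<in>comps E (U - {r}). pc B)"
  using assms(1) unfolding ClaimP_def
  apply -
  apply (drule spec[of _ r], drule spec[of _ F], drule spec[of _ e], drule spec[of _ C])
  using assms(2-) by blast

lemma BasePD: "BaseP U \<Longrightarrow> centroid_tree U E w C \<Longrightarrow> cost w C \<le> aa D * pc U"
  unfolding BaseP_def by blast

lemma finU: "U \<subseteq> V \<Longrightarrow> finite U" using finV finite_subset by blast

lemma base_from_claim:
  assumes UV: "U \<subseteq> V" and cU: "conn E U" and ne: "U \<noteq> {}" and cl: "ClaimP U"
  shows "BaseP U"
  unfolding BaseP_def
proof (intro allI impI)
  fix C assume ct: "centroid_tree U E w C"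
  obtain \<rho> where \<rho>: "\<rho> \<in> U" "\<forall>x\<in>U. \<rho> \<in> ancs T x" using topmost[OF stT cU UV ne] by blast
  let ?Bs = "comps E (U - {\<rho>})"
  have eD: "card ?Bs \<le> D" using degree[OF cU UV \<rho>(1)] .
  have "cost w C \<le> aa (card ?Bs) * (sum w U + (\<Sum>B\<in>{}. sum w B)) + aa D * (\<Sum>B\<in>?Bs. pc B)"
    using ClaimPD[OF cl \<rho>(1) _ _ eD ct, of "{}"] by simp
  then have c1: "cost w C \<le> aa (card ?Bs) * sum w U + aa D * (\<Sum>B\<in>?Bs. pc B)" by simp
  have fin: "finite ?Bs" using finite_comps finU[OF UV] by blast
  have "(\<Sum>B\<in>?Bs. pc B) + sum w (U - {}) \<le> pc U"
  proof (rule pc_split[OF UV \<rho>(1) \<rho>(2) fin])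
    show "\<forall>P\<in>?Bs. P \<subseteq> U" using comps_sub[of _ "U - {\<rho>}"] by blast
    show "\<forall>P\<in>?Bs. \<forall>Q\<in>?Bs. P \<noteq> Q \<longrightarrow> P \<inter> Q = {}" using comps_disj'[of _ "U - {\<rho>}"] by blast
    show "\<forall>P\<in>?Bs. \<rho> \<in> P \<longrightarrow> P \<subseteq> {}" using comps_sub[of _ "U - {\<rho>}"] by blast
  qed
  then have c2: "(\<Sum>B\<in>?Bs. pc B) + sum w U \<le> pc U" by simp
  have "aa (card ?Bs) * sum w U \<le> aa D * sum w U"
    by (rule mult_right_mono[OF aa_mono[OF eD] sumw_nonneg[OF UV]])
  moreover have "aa D * ((\<Sum>B\<in>?Bs. pc B) + sum w U) \<le> aa D * pc U"
    by (rule mult_left_mono[OF c2]) (use aa_ge1[of D] in simp)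
  ultimately show "cost w C \<le> aa D * pc U" using c1 by (simp add: algebra_simps)
qed

lemma ct_facts:
  assumes ct: "centroid_tree U E w (Node c cs)"
  shows "c \<in> U" "is_centroid E U w c" "search_tree E U (Node c cs)"
    "\<And>t. t \<in> set cs \<Longrightarrow> centroid_tree (tset t) E w t"
    "\<And>t. t \<in> set cs \<Longrightarrow> tset t \<in> comps E (U - {c})"
proof -
  show st: "search_tree E U (Node c cs)" using ct unfolding centroid_tree_def by blast
  show "c \<in> U" using st_node(1)[OF st] .
  have "is_centroid E (tset (Node c cs)) w (root (Node c cs))"
    using ct unfolding centroid_tree_def by simp
  then show "is_centroid E U w c" using st_tset[OF st] by simp
  fix t assume t: "t \<in> set cs"
  show "tset t \<in> comps E (U - {c})" using st_child_sub(1)[OF st t] .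
  have "subtrees t \<subseteq> subtrees (Node c cs)" using t by auto
  then show "centroid_tree (tset t) E w t"
    using ct st_node(4)[OF st t] unfolding centroid_tree_def by blast
qed

lemma child_sum:
  assumes ct: "centroid_tree U E w (Node c cs)"
    and b: "\<And>t. t \<in> set cs \<Longrightarrow> cost w t \<le> G (tset t)"
  shows "cost w (Node c cs) \<le> sum w U + (\<Sum>K\<in>comps E (U - {c}). G K)"
proof -
  have st: "search_tree E U (Node c cs)" using ct_facts(3)[OF ct] .
  have inj: "inj_on tset (set cs)" using st_node(2)[OF st] by (simp add: distinct_map)
  have img: "tset ` set cs = comps E (U - {c})" using st_node(3)[OF st] by simp
  have "(\<Sum>t\<in>set cs. cost w t) \<le> (\<Sum>t\<in>set cs. G (tset t))" using b by (rule sum_mono)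
  also have "\<dots> = (\<Sum>K\<in>tset ` set cs. G K)" using sum.reindex[OF inj, of G] by simp
  finally show ?thesis using cost_node[OF st, of w] img by simp
qed

end


context cproblem
begin

lemma claim_step:
  assumes UV: "U \<subseteq> V" and cU: "conn E U"
    and IH: "\<And>K. K \<subseteq> V \<Longrightarrow> conn E K \<Longrightarrow> K \<noteq> {} \<Longrightarrow> card K < card U \<Longrightarrow> ClaimP K \<and> BaseP K"
  shows "ClaimP U"
  unfolding ClaimP_def
proof (intro allI impI)
  fix r F e C
  assume rU: "r \<in> U" and FB: "F \<subseteq> comps E (U - {r})" and ce: "card (comps E (U - {r}) - F) \<le> e"
    and eD: "e \<le> D" and ct: "centroid_tree U E w C"
  define Bs where "Bs = comps E (U - {r})"
  define W where "W = sum w U"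
  define X where "X = (\<Sum>B\<in>F. sum w B)"
  define al where "al = aa D"
  obtain c cs where C: "C = Node c cs" by (cases C) auto
  have ct': "centroid_tree U E w (Node c cs)" using ct C by simp
  have cU': "c \<in> U" using ct_facts(1)[OF ct'] .
  have cent: "is_centroid E U w c" using ct_facts(2)[OF ct'] .
  have finU: "finite U" using finU[OF UV] .
  have finBs: "finite Bs" unfolding Bs_def using finite_comps finU by blast
  have W0: "W \<ge> 0" unfolding W_def using sumw_nonneg[OF UV] .
  have X0: "X \<ge> 0" unfolding X_def
  proof (rule sum_nonneg)
    fix B assume "B \<in> F"
    then have "B \<subseteq> V" using FB comps_sub[of B "U - {r}"] UV by blast
    then show "sum w B \<ge> 0" using sumw_nonneg by blast
  qed
  have al1: "al \<ge> 1" unfolding al_def using aa_ge1 .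
  have ae1: "aa e \<ge> 1" using aa_ge1 .
  have aeal: "aa e \<le> al" unfolding al_def using aa_mono[OF eD] .
  have Kfacts: "K \<subseteq> V \<and> conn E K \<and> K \<noteq> {} \<and> card K < card U" if K: "K \<in> comps E (U - {c})" for K
  proof -
    have "K \<subseteq> U - {c}" using comps_sub[OF K] .
    then have "K \<subset> U" using cU' by blast
    then show ?thesis using comps_conn[OF K] comps_ne[OF K] UV psubset_card_mono[OF finU] by blast
  qed
  have KIH: "ClaimP K \<and> BaseP K" if K: "K \<in> comps E (U - {c})" for K
    using IH Kfacts[OF K] by blast
  have pcBs0: "(\<Sum>B\<in>Bs. pc B) \<ge> 0"
    unfolding Bs_def by (rule sum_nonneg) (use pc_nonneg comps_sub[of _ "U - {r}"] UV in blast)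
  show "cost w C \<le> aa e * (sum w U + (\<Sum>B\<in>F. sum w B)) + aa D * (\<Sum>B\<in>comps E (U - {r}). pc B)"
  proof (cases "c = r")
    case True
    have "cost w (Node c cs) \<le> W + (\<Sum>K\<in>comps E (U - {c}). al * pc K)"
      unfolding W_def
    proof (rule child_sum[OF ct'])
      fix t assume t: "t \<in> set cs"
      have K: "tset t \<in> comps E (U - {c})" using ct_facts(5)[OF ct' t] .
      show "cost w t \<le> al * pc (tset t)"
        unfolding al_def using BasePD[OF conjunct2[OF KIH[OF K]] ct_facts(4)[OF ct' t]] .
    qed
    also have "\<dots> = W + al * (\<Sum>B\<in>Bs. pc B)" unfolding Bs_def True by (simp add: sum_distrib_left)
    finally have "cost w C \<le> W + al * (\<Sum>B\<in>Bs. pc B)" using C by simp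
    moreover have "W \<le> aa e * (W + X)"
    proof -
      have "W \<le> W + X" using X0 by simp
      also have "\<dots> \<le> aa e * (W + X)" using ae1 W0 X0 by (simp add: mult_le_cancel_right1)
      finally show ?thesis .
    qed
    ultimately show ?thesis unfolding W_def X_def Bs_def al_def by simp
  next
    case False
    have "c \<in> U - {r}" using cU' False by blast
    then obtain B0 where B0: "B0 \<in> Bs" "c \<in> B0" unfolding Bs_def using comp_of[of c "U - {r}"] by blast
    have "r \<in> U - {c}" using rU False by blast
    then obtain U' where U': "U' \<in> comps E (U - {c})" "r \<in> U'" using comp_of[of r "U - {c}"] by blast
    interpret sp: splitc E U r c B0 U'
      by (rule splitc.intro[OF sgraph_axioms], unfold_locales)
         (use cU rU cU' False B0 U' in \<open>auto simp: Bs_def\<close>)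
    have BsEq: "sp.Bs = Bs" unfolding sp.Bs_def Bs_def ..
    define Q where "Q = sp.Q"
    define RS where "RS = sp.RS"
    define W' where "W' = sum w U'"
    have finQ: "finite Q" unfolding Q_def using sp.finite_Q[OF finU] .
    have finRS: "finite RS" unfolding RS_def using sp.finite_RS[OF finU] .
    have B0C: "B0 \<in> comps E (U - {r})" using B0(1) unfolding Bs_def .
    have B0V: "B0 \<subseteq> V" using comps_sub[OF B0C] UV by blast
    have finB0: "finite B0" using finite_subset[OF _ finU] comps_sub[OF B0C] by blast
    obtain \<rho> where \<rho>: "\<rho> \<in> B0" "\<forall>x\<in>B0. \<rho> \<in> ancs T x"
      using topmost[OF stT comps_conn[OF B0C] B0V comps_ne[OF B0C]] by blast
    have U'C: "ClaimP U'" using KIH[OF U'(1)] by blast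
    have U'V: "U' \<subseteq> V" using comps_sub[OF U'(1)] UV by blast
    have RSsub: "R \<in> comps E (U - {c})" "R \<subseteq> B0 - {c}" "R \<inter> U' = {}" if "R \<in> RS" for R
      using sp.RS_facts that unfolding RS_def by blast+
    have Qsub: "D \<subseteq> B0 - {c}" "D \<subseteq> U'" "D \<in> comps E (U' - {r})" "D \<notin> Bs" if "D \<in> Q" for D
      using sp.Q_facts that unfolding Q_def BsEq by blast+
    have QRSd: "\<forall>P\<in>Q \<union> RS. \<forall>P'\<in>Q \<union> RS. P \<noteq> P' \<longrightarrow> P \<inter> P' = {}"
      using sp.QRS_disj unfolding Q_def RS_def .
    have QRSs: "\<forall>P\<in>Q \<union> RS. P \<subseteq> B0 - {c}" using sp.QRS_sub unfolding Q_def RS_def .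
    have QRS0: "Q \<inter> RS = {}" using sp.Q_RS_disj unfolding Q_def RS_def .
    have QBs: "Q \<inter> Bs = {}" using sp.Q_Bs_disj unfolding Q_def BsEq .
    have U'eq: "comps E (U' - {r}) = (Bs - {B0}) \<union> Q" using sp.comps_U'_eq unfolding Q_def BsEq .
    have compsc: "comps E (U - {c}) = insert U' RS" using sp.comps_c unfolding RS_def .
    have U'RS: "U' \<notin> RS" unfolding RS_def sp.RS_def by blast
    have wfin: "finite P" if "P \<in> Q \<union> RS" for P using QRSs that finB0 finite_subset by blast
    have W'half: "2 * W' \<le> W"
    proof -
      have "sum w U' \<le> sum w U / 2" using cent U'(1) unfolding is_centroid_def by simp
      then show ?thesis unfolding W'_def W_def by simp
    qed
    have Weq: "W = w c + W' + (\<Sum>R\<in>RS. sum w R)"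
    proof -
      have "W = w c + sum w (U - {c})" unfolding W_def using sum.remove[OF finU cU'] by simp
      also have "U - {c} = \<Union>(insert U' RS)" using comps_Union[of "U - {c}"] compsc by simp
      also have "sum w (\<Union>(insert U' RS)) = (\<Sum>K\<in>insert U' RS. sum w K)"
      proof -
        have inC: "A \<in> comps E (U - {c})" if "A \<in> insert U' RS" for A using that compsc by simp
        have "\<forall>A\<in>insert U' RS. finite A"
        proof
          fix A assume "A \<in> insert U' RS"
          then have "A \<subseteq> U" using comps_sub[OF inC] by blast
          then show "finite A" using finU by (rule finite_subset)
        qed
        moreover have "\<forall>A\<in>insert U' RS. \<forall>B\<in>insert U' RS. A \<noteq> B \<longrightarrow> A \<inter> B = {}"
          using comps_disj'[OF inC inC] by blast
        ultimately show ?thesis using sum.Union_disjoint[of "insert U' RS" w] by simp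
      qed
      also have "\<dots> = W' + (\<Sum>R\<in>RS. sum w R)" unfolding W'_def using finRS U'RS by simp
      finally show ?thesis by simp
    qed
    have SQRSw: "(\<Sum>P\<in>Q \<union> RS. sum w P) = (\<Sum>P\<in>Q. sum w P) + (\<Sum>P\<in>RS. sum w P)"
      using sum.union_disjoint[OF finQ finRS QRS0] .
    have WB0: "w c + (\<Sum>R\<in>RS. sum w R) + (\<Sum>P\<in>Q. sum w P) \<le> sum w B0"
    proof -
      have "(\<Sum>P\<in>Q \<union> RS. sum w P) = sum w (\<Union>(Q \<union> RS))"
        using sum.Union_disjoint[of "Q \<union> RS" w] wfin QRSd by simp
      moreover have "c \<notin> \<Union>(Q \<union> RS)"
      proof
        assume "c \<in> \<Union>(Q \<union> RS)"
        then obtain P where "P \<in> Q \<union> RS" "c \<in> P" by blast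
        then show False using QRSs by blast
      qed
      moreover have "finite (\<Union>(Q \<union> RS))"
      proof (rule finite_Union)
        show "finite (Q \<union> RS)" using finQ finRS by simp
      qed (fact wfin)
      ultimately have "sum w (insert c (\<Union>(Q \<union> RS))) = w c + (\<Sum>P\<in>Q \<union> RS. sum w P)" by simp
      moreover have "insert c (\<Union>(Q \<union> RS)) \<subseteq> B0"
      proof -
        have "\<Union>(Q \<union> RS) \<subseteq> B0" using QRSs by blast
        then show ?thesis using B0(2) by blast
      qed
      then have "sum w (insert c (\<Union>(Q \<union> RS))) \<le> sum w B0" by (rule sumw_mono[OF _ B0V])
      ultimately have "w c + (\<Sum>P\<in>Q \<union> RS. sum w P) \<le> sum w B0" by linarith
      then show ?thesis using SQRSw by simp
    qed
    have SQw0: "(\<Sum>P\<in>Q. sum w P) \<ge> 0"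
    proof (rule sum_nonneg)
      fix P assume "P \<in> Q"
      then have "P \<subseteq> V" using Qsub(1)[of P] B0V by blast
      then show "sum w P \<ge> 0" by (rule sumw_nonneg)
    qed
    define PB where "PB = (\<Sum>B\<in>Bs - {B0}. pc B)"
    define SQ where "SQ = (\<Sum>P\<in>Q. pc P)"
    define SR where "SR = (\<Sum>P\<in>RS. pc P)"
    have PBs: "(\<Sum>B\<in>Bs. pc B) = pc B0 + PB" unfolding PB_def using sum.remove[OF finBs B0(1)] by simp
    have PBs': "(\<Sum>B\<in>comps E (U' - {r}). pc B) = PB + SQ"
    proof -
      have "(Bs - {B0}) \<inter> Q = {}" using QBs by blast
      moreover have "finite (Bs - {B0})" using finBs by simp
      ultimately show ?thesis unfolding U'eq PB_def SQ_def using sum.union_disjoint[of "Bs - {B0}" Q pc] finQ by simp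
    qed
    have PQRS: "(\<Sum>P\<in>Q \<union> RS. pc P) = SQ + SR"
      unfolding SQ_def SR_def using sum.union_disjoint[OF finQ finRS QRS0] .
    have sav: "SQ + SR + sum w (B0 - P0) \<le> pc B0" if "\<forall>P\<in>Q \<union> RS. \<rho> \<in> P \<longrightarrow> P \<subseteq> P0" for P0
    proof -
      have "(\<Sum>P\<in>Q \<union> RS. pc P) + sum w (B0 - P0) \<le> pc B0"
      proof (rule pc_split[OF B0V \<rho>(1) \<rho>(2)])
        show "finite (Q \<union> RS)" using finQ finRS by simp
        show "\<forall>P\<in>Q \<union> RS. P \<subseteq> B0" using QRSs by blast
        show "\<forall>P\<in>Q \<union> RS. \<forall>Q\<in>Q \<union> RS. P \<noteq> Q \<longrightarrow> P \<inter> Q = {}" by (fact QRSd)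
        show "\<forall>P\<in>Q \<union> RS. \<rho> \<in> P \<longrightarrow> P \<subseteq> P0" by (fact that)
      qed
      then show ?thesis using PQRS by simp
    qed
    have bound: "cost w C \<le> W + (aa e' * (W' + (\<Sum>B\<in>F'. sum w B)) + al * (PB + SQ)) + al * SR"
      if F': "F' \<subseteq> comps E (U' - {r})" and ce': "card (comps E (U' - {r}) - F') \<le> e'" and eD': "e' \<le> D"
      for F' e'
    proof -
      define CB where "CB = aa e' * (W' + (\<Sum>B\<in>F'. sum w B)) + al * (\<Sum>B\<in>comps E (U' - {r}). pc B)"
      define G where "G K = (if K = U' then CB else al * pc K)" for K
      have "cost w (Node c cs) \<le> W + (\<Sum>K\<in>comps E (U - {c}). G K)"
        unfolding W_def
      proof (rule child_sum[OF ct'])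
        fix t assume t: "t \<in> set cs"
        have K: "tset t \<in> comps E (U - {c})" using ct_facts(5)[OF ct' t] .
        have ctt: "centroid_tree (tset t) E w t" using ct_facts(4)[OF ct' t] .
        show "cost w t \<le> G (tset t)"
        proof (cases "tset t = U'")
          case True
          have "cost w t \<le> CB"
            unfolding CB_def W'_def al_def using ClaimPD[OF U'C U'(2) F' ce' eD', of t] ctt True by simp
          then show ?thesis unfolding G_def using True by simp
        next
          case False
          then show ?thesis unfolding G_def al_def using BasePD[OF conjunct2[OF KIH[OF K]] ctt] by simp
        qed
      qed
      also have "(\<Sum>K\<in>comps E (U - {c}). G K) = CB + (\<Sum>K\<in>RS. G K)"
        unfolding compsc using finRS U'RS by (simp add: G_def)
      also have "(\<Sum>K\<in>RS. G K) = al * SR"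
        unfolding SR_def G_def sum_distrib_left using U'RS by (intro sum.cong) auto
      finally show ?thesis unfolding CB_def PBs' using C by simp
    qed
    have target: "aa e * (sum w U + (\<Sum>B\<in>F. sum w B)) + aa D * (\<Sum>B\<in>comps E (U - {r}). pc B)
        = aa e * (W + X) + al * (pc B0 + PB)"
      unfolding W_def X_def al_def Bs_def[symmetric] PBs ..
    have B0Bs: "B0 \<in> Bs" using B0(1) .
    have finF: "finite F" using FB finBs unfolding Bs_def by (rule finite_subset)
    have FQ: "F \<inter> Q = {}" using FB QBs unfolding Bs_def by blast
    show ?thesis
    proof (cases "B0 \<in> F")
      case True
      define F' where "F' = (F - {B0}) \<union> Q"
      have F'sub: "F' \<subseteq> comps E (U' - {r})" unfolding F'_def U'eq using FB unfolding Bs_def by blast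
      have "comps E (U' - {r}) - F' \<subseteq> Bs - F" unfolding F'_def U'eq using True by blast
      then have "card (comps E (U' - {r}) - F') \<le> card (Bs - F)"
        by (rule card_mono[rotated]) (use finBs in blast)
      then have ce': "card (comps E (U' - {r}) - F') \<le> e" using ce unfolding Bs_def by simp
      have X'eq: "(\<Sum>B\<in>F'. sum w B) = (\<Sum>B\<in>F - {B0}. sum w B) + (\<Sum>B\<in>Q. sum w B)"
        unfolding F'_def using sum.union_disjoint[of "F - {B0}" Q "\<lambda>B. sum w B"] finF finQ FQ by auto
      have Xeq: "X = sum w B0 + (\<Sum>B\<in>F - {B0}. sum w B)"
        unfolding X_def using sum.remove[OF finF True] by simp
      have sv: "SQ + SR + sum w (B0 - B0) \<le> pc B0" by (rule sav) (use QRSs in blast)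
      show ?thesis unfolding target
      proof (rule arithA)
        show "(\<Sum>B\<in>F'. sum w B) \<le> X - (W - W')" using X'eq Xeq Weq WB0 by simp
        show "SQ + SR \<le> pc B0" using sv by simp
        show "2 * W' \<le> W" by (fact W'half)
        show "1 \<le> aa e" by (fact ae1)
        show "0 \<le> W" by (fact W0)
        show "0 \<le> al" using al1 by simp
        show "cost w C \<le> W + (aa e * (W' + (\<Sum>B\<in>F'. sum w B)) + al * (PB + SQ)) + al * SR"
          by (rule bound[OF F'sub ce' eD])
      qed
    next
      case nF: False
      show ?thesis
      proof (cases "\<exists>Q0\<in>Q. \<rho> \<in> Q0")
        case True
        then obtain Q0 where Q0: "Q0 \<in> Q" "\<rho> \<in> Q0" by blast
        define F' where "F' = F \<union> (Q - {Q0})"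
        have F'sub: "F' \<subseteq> comps E (U' - {r})" unfolding F'_def U'eq using FB nF unfolding Bs_def by blast
        have "comps E (U' - {r}) - F' \<subseteq> insert Q0 ((Bs - F) - {B0})" unfolding F'_def U'eq by blast
        then have "card (comps E (U' - {r}) - F') \<le> card (insert Q0 ((Bs - F) - {B0}))"
          using finBs by (intro card_mono) auto
        also have "\<dots> \<le> Suc (card ((Bs - F) - {B0}))"
        proof -
          have "finite ((Bs - F) - {B0})" using finBs by simp
          then show ?thesis by (simp add: card_insert_if)
        qed
        also have "\<dots> = card (Bs - F)"
        proof -
          have "B0 \<in> Bs - F" using B0Bs nF by blast
          moreover have "finite (Bs - F)" using finBs by blast
          ultimately show ?thesis using card_Diff1_less[of "Bs - F" B0] card_Diff_singleton[of B0 "Bs - F"]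
            by (simp add: card_gt_0_iff Suc_diff_1)
        qed
        finally have ce': "card (comps E (U' - {r}) - F') \<le> e" using ce unfolding Bs_def by simp
        have X'eq: "(\<Sum>B\<in>F'. sum w B) = X + (\<Sum>B\<in>Q - {Q0}. sum w B)"
          unfolding F'_def X_def using sum.union_disjoint[of F "Q - {Q0}" "\<lambda>B. sum w B"] finF finQ FQ by auto
        have SQeq: "(\<Sum>B\<in>Q. sum w B) = sum w Q0 + (\<Sum>B\<in>Q - {Q0}. sum w B)"
          using sum.remove[OF finQ Q0(1)] by simp
        have sv: "SQ + SR + sum w (B0 - Q0) \<le> pc B0"
        proof (rule sav, intro ballI impI)
          fix P assume P: "P \<in> Q \<union> RS" "\<rho> \<in> P"
          have "Q0 \<in> Q \<union> RS" using Q0 by blast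
          have "P \<noteq> Q0 \<longrightarrow> P \<inter> Q0 = {}" using QRSd P(1) \<open>Q0 \<in> Q \<union> RS\<close> by blast
          then have "P = Q0" using P(2) Q0(2) by blast
          then show "P \<subseteq> Q0" by simp
        qed
        have svEq: "sum w (B0 - Q0) = sum w B0 - sum w Q0"
          using sum_diff[OF finB0, of Q0 w] Qsub(1)[OF Q0(1)] by blast
        have SQ'0: "(\<Sum>B\<in>Q - {Q0}. sum w B) \<ge> 0"
        proof (rule sum_nonneg)
          fix P assume "P \<in> Q - {Q0}"
          then have "P \<subseteq> V" using Qsub(1)[of P] B0V by blast
          then show "sum w P \<ge> 0" by (rule sumw_nonneg)
        qed
        show ?thesis unfolding target
        proof (rule arithB)
          show "(\<Sum>B\<in>F'. sum w B) = X + (\<Sum>B\<in>Q - {Q0}. sum w B)" by (fact X'eq)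
          show "SQ + SR + sum w (B0 - Q0) \<le> pc B0" by (fact sv)
          show "sum w (B0 - Q0) \<ge> (W - W') + (\<Sum>B\<in>Q - {Q0}. sum w B)" using svEq Weq WB0 SQeq by simp
          show "aa e \<le> al" by (fact aeal)
          show "(W - W') + (\<Sum>B\<in>Q - {Q0}. sum w B) \<ge> 0" using W'half W0 SQ'0 by simp
          show "2 * W' \<le> W" by (fact W'half)
          show "1 \<le> aa e" by (fact ae1)
          show "0 \<le> W" by (fact W0)
          show "0 \<le> al" using al1 by simp
          show "cost w C \<le> W + (aa e * (W' + (\<Sum>B\<in>F'. sum w B)) + al * (PB + SQ)) + al * SR"
            by (rule bound[OF F'sub ce' eD])
        qed
      next
        case nQ: False
        define F' where "F' = F \<union> Q"
        have F'sub: "F' \<subseteq> comps E (U' - {r})" unfolding F'_def U'eq using FB nF unfolding Bs_def by blast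
        have B0BF: "B0 \<in> Bs - F" using B0Bs nF by blast
        have cBF: "card (Bs - F) \<ge> 1"
          using B0BF finBs by (metis One_nat_def Suc_leI card_gt_0_iff empty_iff finite_Diff)
        then have e1: "e \<ge> 1" using ce unfolding Bs_def by simp
        have "comps E (U' - {r}) - F' \<subseteq> (Bs - F) - {B0}" unfolding F'_def U'eq by blast
        then have "card (comps E (U' - {r}) - F') \<le> card ((Bs - F) - {B0})"
          using finBs by (intro card_mono) auto
        also have "\<dots> = card (Bs - F) - 1" using card_Diff_singleton[OF B0BF] .
        finally have ce': "card (comps E (U' - {r}) - F') \<le> e - 1" using ce unfolding Bs_def by simp
        have eD': "e - 1 \<le> D" using eD by simp
        have X'eq: "(\<Sum>B\<in>F'. sum w B) = X + (\<Sum>B\<in>Q. sum w B)"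
          unfolding F'_def X_def using sum.union_disjoint[OF finF finQ FQ] .
        have sv: "SQ + SR + sum w (B0 - (B0 - \<Union>Q)) \<le> pc B0"
        proof (rule sav, intro ballI impI)
          fix P assume P: "P \<in> Q \<union> RS" "\<rho> \<in> P"
          then have PR: "P \<in> RS" using nQ by blast
          have "P \<inter> D = {}" if "D \<in> Q" for D
          proof -
            have "P \<noteq> D" using PR that QRS0 by blast
            then show ?thesis using QRSd PR that by blast
          qed
          then show "P \<subseteq> B0 - \<Union>Q" using RSsub(2)[OF PR] by blast
        qed
        have "B0 - (B0 - \<Union>Q) = \<Union>Q" using Qsub(1) by blast
        then have svEq: "sum w (B0 - (B0 - \<Union>Q)) = (\<Sum>B\<in>Q. sum w B)"
          using sum.Union_disjoint[of Q w] wfin QRSd by simp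
        show ?thesis unfolding target
        proof (rule arithC)
          show "(\<Sum>B\<in>F'. sum w B) = X + (\<Sum>B\<in>Q. sum w B)" by (fact X'eq)
          show "SQ + SR + sum w (B0 - (B0 - \<Union>Q)) \<le> pc B0" by (fact sv)
          show "sum w (B0 - (B0 - \<Union>Q)) \<ge> (\<Sum>B\<in>Q. sum w B)" using svEq by simp
          show "aa (e - 1) \<le> al" unfolding al_def using aa_mono[OF eD'] .
          show "aa e = 1 + aa (e - 1) / 2" using aa_rec[OF e1] .
          show "aa (e - 1) \<le> aa e" using aa_mono[of "e - 1" e] by simp
          show "2 * W' \<le> W" by (fact W'half)
          show "0 \<le> (\<Sum>B\<in>Q. sum w B)" by (fact SQw0)
          show "0 \<le> X" by (fact X0)
          show "0 \<le> W" by (fact W0)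
          show "0 \<le> aa (e - 1)" using aa_ge1[of "e - 1"] by simp
          show "0 \<le> al" using al1 by simp
          show "cost w C \<le> W + (aa (e - 1) * (W' + (\<Sum>B\<in>F'. sum w B)) + al * (PB + SQ)) + al * SR"
            by (rule bound[OF F'sub ce' eD'])
        qed
      qed
    qed
  qed
qed

end


lemma reach_mono_rel:
  assumes "reach E S x y" "\<And>z z'. z \<in> S \<Longrightarrow> z' \<in> S \<Longrightarrow> E z z' \<Longrightarrow> E2 z z'" "S \<subseteq> S'"
  shows "reach E2 S' x y"
  using assms(1)
proof (induction rule: reach_induct)
  case base then show ?case by simp
next
  case (step y z)
  have "reach E2 S' y z" using reach_step[of y S' z E2] step assms(2,3) by blast
  then show ?case using step.IH reach_trans by metis
qed

definition EdS :: "('a \<Rightarrow> 'a \<Rightarrow> bool) \<Rightarrow> 'a set \<Rightarrow> 'a set set" where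
  "EdS E S = {{u, v} | u v. u \<in> S \<and> v \<in> S \<and> E u v}"

lemma EdS_sub: "EdS E S \<subseteq> Pow S" unfolding EdS_def by blast

lemma finite_EdS: "finite S \<Longrightarrow> finite (EdS E S)"
  using EdS_sub[of E S] finite_subset by blast

context sgraph
begin

lemma conn_edges:
  assumes "finite S" "conn E S"
  shows "card S - 1 \<le> card (EdS E S)"
  using assms
proof (induction "card S" arbitrary: S rule: less_induct)
  case less
  show ?case
  proof (cases "S = {}")
    case True then show ?thesis by simp
  next
    case False
    then obtain v where v: "v \<in> S" by blast
    let ?Cs = "comps E (S - {v})"
    have finCs: "finite ?Cs" using finite_comps less.prems(1) by blast
    have Csub: "C \<subseteq> S - {v}" if "C \<in> ?Cs" for C using comps_sub[OF that] .
    have finC: "finite C" if "C \<in> ?Cs" for C using Csub[OF that] less.prems(1) finite_subset by blast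
    have IH: "card C - 1 \<le> card (EdS E C)" if C: "C \<in> ?Cs" for C
    proof (rule less.hyps)
      have "C \<subset> S" using Csub[OF C] v by blast
      then show "card C < card S" by (rule psubset_card_mono[OF less.prems(1)])
    qed (use finC[OF C] comps_conn[OF C] in auto)
    have "\<forall>C\<in>?Cs. \<exists>u. u \<in> C \<and> E v u" using comp_nbr[OF less.prems(2) v] by blast
    then obtain f where f: "\<forall>C\<in>?Cs. f C \<in> C \<and> E v (f C)" using bchoice[of ?Cs "\<lambda>C u. u \<in> C \<and> E v u"] by blast
    define g where "g C = {v, f C}" for C
    have fS: "f C \<in> S - {v}" if "C \<in> ?Cs" for C using f Csub that by blast
    have ginj: "inj_on g ?Cs"
    proof (rule inj_onI)
      fix C1 C2 assume C: "C1 \<in> ?Cs" "C2 \<in> ?Cs" "g C1 = g C2"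
      have "f C1 \<noteq> v" using fS C by blast
      moreover have "f C1 \<in> {v, f C2}" using C(3) unfolding g_def by blast
      ultimately have "f C1 = f C2" by blast
      moreover have "f C1 \<in> C1" "f C2 \<in> C2" using f C(1,2) by blast+
      ultimately show "C1 = C2" using comps_disj[OF C(1) C(2), of "f C1"] by simp
    qed
    let ?N = "g ` ?Cs"
    let ?M = "\<Union>C\<in>?Cs. EdS E C"
    have NS: "?N \<subseteq> EdS E S"
    proof
      fix e assume "e \<in> ?N"
      then obtain C where C: "C \<in> ?Cs" "e = {v, f C}" unfolding g_def by blast
      have "f C \<in> S" "E v (f C)" using fS[OF C(1)] f C(1) by blast+
      then show "e \<in> EdS E S" unfolding EdS_def using C(2) v by blast
    qed
    have MS: "?M \<subseteq> EdS E S"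
    proof
      fix e assume "e \<in> ?M"
      then obtain C where C: "C \<in> ?Cs" "e \<in> EdS E C" by blast
      then obtain a b where "e = {a, b}" "a \<in> C" "b \<in> C" "E a b" unfolding EdS_def by blast
      then show "e \<in> EdS E S" unfolding EdS_def using Csub[OF C(1)] by blast
    qed
    have NM: "?N \<inter> ?M = {}"
    proof -
      have "v \<notin> e" if "e \<in> ?M" for e
      proof -
        obtain C where C: "C \<in> ?Cs" "e \<in> EdS E C" using \<open>e \<in> ?M\<close> by blast
        then have "e \<subseteq> C" using EdS_sub by blast
        then show ?thesis using Csub[OF C(1)] by blast
      qed
      moreover have "v \<in> e" if "e \<in> ?N" for e using that unfolding g_def by blast
      ultimately show ?thesis by blast
    qed
    have finM: "finite ?M" by (rule finite_UN_I[OF finCs]) (use finC finite_EdS in blast)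
    have cardM: "card ?M = (\<Sum>C\<in>?Cs. card (EdS E C))"
    proof (rule card_UN_disjoint[OF finCs])
      show "\<forall>C\<in>?Cs. finite (EdS E C)" using finC finite_EdS by blast
      show "\<forall>C1\<in>?Cs. \<forall>C2\<in>?Cs. C1 \<noteq> C2 \<longrightarrow> EdS E C1 \<inter> EdS E C2 = {}"
      proof (intro ballI impI)
        fix C1 C2 assume C: "C1 \<in> ?Cs" "C2 \<in> ?Cs" "C1 \<noteq> C2"
        have "C1 \<inter> C2 = {}" using comps_disj'[OF C] .
        then show "EdS E C1 \<inter> EdS E C2 = {}"
        proof -
          have "e \<noteq> {}" if "e \<in> EdS E C1" for e using that unfolding EdS_def by blast
          moreover have "e \<subseteq> C1" if "e \<in> EdS E C1" for e using that EdS_sub by blast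
          moreover have "e \<subseteq> C2" if "e \<in> EdS E C2" for e using that EdS_sub by blast
          ultimately show ?thesis using \<open>C1 \<inter> C2 = {}\<close> by blast
        qed
      qed
    qed
    have "card (EdS E S) \<ge> card (?N \<union> ?M)"
      by (rule card_mono[OF finite_EdS[OF less.prems(1)]]) (use NS MS in blast)
    also have "card (?N \<union> ?M) = card ?N + card ?M"
      using card_Un_disjoint[OF _ finM NM] finCs by blast
    also have "card ?N = card ?Cs" using card_image[OF ginj] .
    finally have c1: "card ?Cs + (\<Sum>C\<in>?Cs. card (EdS E C)) \<le> card (EdS E S)" using cardM by simp
    have "(\<Sum>C\<in>?Cs. card C) = (\<Sum>C\<in>?Cs. (card C - 1) + 1)"
    proof (rule sum.cong)
      fix C assume C: "C \<in> ?Cs"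
      have "card C \<ge> 1" using comps_ne[OF C] finC[OF C] by (metis One_nat_def Suc_leI card_gt_0_iff)
      then show "card C = card C - 1 + 1" by simp
    qed simp
    also have "\<dots> = (\<Sum>C\<in>?Cs. card C - 1) + card ?Cs"
      by (simp only: sum.distrib card_eq_sum)
    also have "\<dots> \<le> (\<Sum>C\<in>?Cs. card (EdS E C)) + card ?Cs" using IH by (simp add: sum_mono)
    finally have c2: "(\<Sum>C\<in>?Cs. card C) \<le> card (EdS E S)" using c1 by simp
    have "card (\<Union>?Cs) = (\<Sum>C\<in>?Cs. card C)"
    proof (rule card_Union_disjoint)
      show "pairwise disjnt ?Cs" unfolding pairwise_def disjnt_def using comps_disj'[of _ "S - {v}"] by blast
    qed (use finC in blast)
    moreover have "\<Union>?Cs = S - {v}" using comps_Union .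
    moreover have "card (S - {v}) = card S - 1" using v less.prems(1) by simp
    ultimately show ?thesis using c2 by simp
  qed
qed

end


locale tgraph = sgraph E for E :: "'a \<Rightarrow> 'a \<Rightarrow> bool" +
  fixes V :: "'a set"
  assumes finV: "finite V" and Ein: "E u v \<Longrightarrow> u \<in> V \<and> v \<in> V" and irr: "\<not> E v v"
    and connV: "conn E V" and edges: "card (EdS E V) = card V - 1"
begin

lemma bridge:
  assumes ab: "E a b"
  shows "\<not> reach (\<lambda>x y. E x y \<and> {x, y} \<noteq> {a, b}) V a b"
proof
  define E' where "E' = (\<lambda>x y. E x y \<and> {x, y} \<noteq> {a, b})"
  assume r: "reach (\<lambda>x y. E x y \<and> {x, y} \<noteq> {a, b}) V a b"
  then have rab: "reach E' V a b" unfolding E'_def .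
  interpret s': sgraph E'
    by unfold_locales (auto simp: E'_def insert_commute dest: symE)
  have rba: "reach E' V b a" using s'.rsym[OF rab] .
  have "conn E' V" unfolding conn_def
  proof (intro ballI)
    fix x y assume "x \<in> V" "y \<in> V"
    then have "reach E V x y" using connV unfolding conn_def by blast
    then show "reach E' V x y"
    proof (induction rule: reach_induct)
      case base then show ?case by simp
    next
      case (step z z')
      have "reach E' V z z'"
      proof (cases "{z, z'} = {a, b}")
        case True
        then have "(z = a \<and> z' = b) \<or> (z = b \<and> z' = a)" by (auto simp: doubleton_eq_iff)
        then show ?thesis using rab rba by blast
      next
        case False
        then show ?thesis using step(2-4) reach_step[of z V z' E'] unfolding E'_def by blast
      qed
      then show ?case using step.IH reach_trans by metis
    qed
  qed
  then have c1: "card V - 1 \<le> card (EdS E' V)" using s'.conn_edges[OF finV] by blast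
  have eq: "EdS E' V = EdS E V - {{a, b}}"
  proof
    show "EdS E' V \<subseteq> EdS E V - {{a, b}}" unfolding EdS_def E'_def by blast
    show "EdS E V - {{a, b}} \<subseteq> EdS E' V"
    proof
      fix e assume "e \<in> EdS E V - {{a, b}}"
      then obtain u v where "e = {u, v}" "u \<in> V" "v \<in> V" "E u v" "e \<noteq> {a, b}" unfolding EdS_def by blast
      then show "e \<in> EdS E' V" unfolding EdS_def E'_def by blast
    qed
  qed
  have abV: "a \<in> V" "b \<in> V" using Ein[OF ab] by auto
  have "{a, b} \<in> EdS E V" unfolding EdS_def using abV ab by blast
  then have "card (EdS E' V) = card (EdS E V) - 1"
    unfolding eq using finite_EdS[OF finV] by (simp add: card_Diff_singleton)
  moreover have "a \<noteq> b" using ab irr by blast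
  then have "card {a, b} = 2" by simp
  moreover have "card {a, b} \<le> card V" using abV finV by (intro card_mono) auto
  ultimately show False using c1 edges by simp
qed

lemma tree_sep:
  assumes cU: "conn E U" and UV: "U \<subseteq> V" and v: "v \<in> U" and Dc: "Dc \<in> comps E (U - {v})"
    and u: "u \<in> Dc" "E v u" and K: "K \<in> comps E (U - {u})" "v \<in> K"
  shows "K \<inter> Dc = {}"
proof (rule ccontr)
  assume "K \<inter> Dc \<noteq> {}"
  then obtain y where y: "y \<in> K" "y \<in> Dc" by blast
  define E' where "E' = (\<lambda>x y. E x y \<and> {x, y} \<noteq> {v, u})"
  have r1: "reach E K v y" using comps_conn[OF K(1)] K(2) y(1) unfolding conn_def by blast
  have KV: "K \<subseteq> V" using comps_sub[OF K(1)] UV by blast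
  have r1': "reach E' V v y"
  proof (rule reach_mono_rel[OF r1 _ KV])
    fix z z' assume "z \<in> K" "z' \<in> K" "E z z'"
    moreover have "u \<notin> K" using comps_sub[OF K(1)] by blast
    ultimately show "E' z z'" unfolding E'_def by (auto simp: doubleton_eq_iff)
  qed
  have r2: "reach E Dc y u" using comps_conn[OF Dc] y(2) u(1) unfolding conn_def by blast
  have DV: "Dc \<subseteq> V" using comps_sub[OF Dc] UV by blast
  have r2': "reach E' V y u"
  proof (rule reach_mono_rel[OF r2 _ DV])
    fix z z' assume "z \<in> Dc" "z' \<in> Dc" "E z z'"
    moreover have "v \<notin> Dc" using comps_sub[OF Dc] by blast
    ultimately show "E' z z'" unfolding E'_def by (auto simp: doubleton_eq_iff)
  qed
  have "reach E' V v u" using reach_trans[OF r1' r2'] .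
  then show False using bridge[OF u(2)] unfolding E'_def by blast
qed

lemma centroid_exists:
  assumes cU: "conn E U" and UV: "U \<subseteq> V" and ne: "U \<noteq> {}" and wpos: "\<forall>x\<in>V. w x \<ge> (0::real)"
  shows "\<exists>c. is_centroid E U w c"
proof -
  have finU: "finite U" using UV finV finite_subset by blast
  define heavy where "heavy x = {K \<in> comps E (U - {x}). sum w K > sum w U / 2}" for x
  define f where "f x = (\<Sum>K\<in>heavy x. card K)" for x
  obtain v where v: "v \<in> U" "\<forall>x\<in>U. f v \<le> f x"
  proof -
    have "Min (f ` U) \<in> f ` U" using finU ne by simp
    then obtain v where "v \<in> U" "f v = Min (f ` U)" by (metis imageE)
    moreover have "\<forall>x\<in>U. Min (f ` U) \<le> f x" using finU by simp
    ultimately show ?thesis using that by metis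
  qed
  have swpos: "sum w A \<ge> 0" if "A \<subseteq> U" for A
    using that UV wpos by (intro sum_nonneg) blast
  have hv: "heavy v = {}"
  proof (rule ccontr)
    assume "heavy v \<noteq> {}"
    then obtain Dc where Dc: "Dc \<in> comps E (U - {v})" "sum w Dc > sum w U / 2" unfolding heavy_def by blast
    obtain u where u: "u \<in> Dc" "E v u" using comp_nbr[OF cU v(1) Dc(1)] by blast
    have DcU: "Dc \<subseteq> U - {v}" using comps_sub[OF Dc(1)] .
    have uU: "u \<in> U" using u(1) DcU by blast
    have finH: "finite (heavy u)" unfolding heavy_def using finite_comps[of "U - {u}"] finU by simp
    have Hsub: "K \<subseteq> Dc - {u}" if K: "K \<in> heavy u" for K
    proof -
      have KC: "K \<in> comps E (U - {u})" and Kh: "sum w K > sum w U / 2" using K unfolding heavy_def by blast+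
      have vK: "v \<notin> K"
      proof
        assume "v \<in> K"
        then have disj: "K \<inter> Dc = {}" using tree_sep[OF cU UV v(1) Dc(1) u KC] by blast
        have KU: "K \<subseteq> U" using comps_sub[OF KC] by blast
        have "sum w (K \<union> Dc) = sum w K + sum w Dc"
          using sum.union_disjoint[of K Dc w] disj finite_subset[OF KU finU] finite_subset[OF _ finU, of Dc] DcU by blast
        moreover have "sum w (K \<union> Dc) \<le> sum w U"
        proof (rule sum_mono2[OF finU])
          show "K \<union> Dc \<subseteq> U" using KU DcU by blast
          show "\<And>b. b \<in> U - (K \<union> Dc) \<Longrightarrow> 0 \<le> w b" using UV wpos by blast
        qed
        ultimately show False using Kh Dc(2) by simp
      qed
      obtain y where y: "y \<in> K" "E u y" using comp_nbr[OF cU uU KC] by blast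
      have KU: "K \<subseteq> U - {u}" using comps_sub[OF KC] .
      have "y \<noteq> v" using y(1) vK by blast
      then have "y \<in> U - {v}" using y(1) KU by blast
      then have yD: "y \<in> Dc" using comps_closed[OF Dc(1) u(1) _ y(2)] by blast
      have "K \<subseteq> U - {v}" using KU vK by blast
      then obtain B where B: "B \<in> comps E (U - {v})" "K \<subseteq> B"
        using conn_sub_comp[OF comps_conn[OF KC] _ comps_ne[OF KC]] by blast
      have "B = Dc" using comps_disj[OF B(1) Dc(1), of y] B(2) y(1) yD by blast
      then show ?thesis using B(2) KU by blast
    qed
    have fu: "f u = card (\<Union>(heavy u))"
      unfolding f_def
    proof (rule card_Union_disjoint[symmetric])
      show "pairwise disjnt (heavy u)" unfolding pairwise_def disjnt_def heavy_def
        using comps_disj'[of _ "U - {u}"] by blast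
      show "\<And>A. A \<in> heavy u \<Longrightarrow> finite A" using Hsub finite_subset[OF _ finU] DcU by blast
    qed
    have finDc: "finite Dc" using finite_subset[OF _ finU] DcU by blast
    have "card (\<Union>(heavy u)) \<le> card (Dc - {u})"
      by (rule card_mono) (use finDc Hsub in blast)+
    also have "\<dots> < card Dc" by (rule card_Diff1_less[OF finDc u(1)])
    also have "card Dc \<le> f v"
    proof -
      have "Dc \<in> heavy v" unfolding heavy_def using Dc by blast
      moreover have "finite (heavy v)" unfolding heavy_def using finite_comps[of "U - {v}"] finU by simp
      ultimately show ?thesis unfolding f_def using member_le_sum[of Dc "heavy v" card] by simp
    qed
    finally have "f u < f v" using fu by simp
    then show False using v(2) uU by fastforce
  qed
  have "is_centroid E U w v"
    unfolding is_centroid_def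
  proof (intro conjI ballI)
    show "v \<in> U" by (fact v(1))
    fix C assume "C \<in> comps E (U - {v})"
    then show "sum w C \<le> sum w U / 2" using hv unfolding heavy_def by fastforce
  qed
  then show ?thesis by blast
qed

lemma ct_exists:
  assumes "conn E U" "U \<subseteq> V" "U \<noteq> {}" "\<forall>x\<in>V. w x \<ge> (0::real)"
  shows "\<exists>C. centroid_tree U E w C"
  using assms(1-3)
proof (induction "card U" arbitrary: U rule: less_induct)
  case less
  obtain c where c: "is_centroid E U w c" using centroid_exists[OF less.prems assms(4)] by blast
  have cU: "c \<in> U" using c unfolding is_centroid_def by blast
  have finU: "finite U" using less.prems(2) finV finite_subset by blast
  let ?Cs = "comps E (U - {c})"
  have "\<forall>K\<in>?Cs. \<exists>t. centroid_tree K E w t"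
  proof
    fix K assume K: "K \<in> ?Cs"
    have KU: "K \<subseteq> U - {c}" using comps_sub[OF K] .
    then have "K \<subset> U" using cU by blast
    then have "card K < card U" by (rule psubset_card_mono[OF finU])
    moreover have "K \<subseteq> V" using KU less.prems(2) by blast
    ultimately show "\<exists>t. centroid_tree K E w t" using less.hyps comps_conn[OF K] comps_ne[OF K] by blast
  qed
  then obtain g where g: "\<forall>K\<in>?Cs. centroid_tree K E w (g K)" using bchoice[of ?Cs "\<lambda>K t. centroid_tree K E w t"] by blast
  have gst: "search_tree E K (g K)" if "K \<in> ?Cs" for K using g that unfolding centroid_tree_def by blast
  have gt: "tset (g K) = K" if "K \<in> ?Cs" for K using st_tset[OF gst[OF that]] .
  obtain L where L: "set L = ?Cs" "distinct L" using finite_distinct_list[OF finite_comps[of "U - {c}"]] finU by blast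
  define ts where "ts = map g L"
  have mt: "map tset ts = L"
  proof -
    have "map tset ts = map (tset \<circ> g) L" unfolding ts_def by simp
    also have "\<dots> = L" by (rule map_idI) (use gt L(1) in auto)
    finally show ?thesis .
  qed
  have st: "search_tree E U (Node c ts)"
  proof (rule search_tree.intros)
    show "c \<in> U" by (fact cU)
    show "distinct (map tset ts)" using mt L(2) by simp
    show "set (map tset ts) = ?Cs" using mt L(1) by simp
    show "\<forall>t\<in>set ts. search_tree E (tset t) t"
    proof
      fix t assume "t \<in> set ts"
      then obtain K where "K \<in> ?Cs" "t = g K" unfolding ts_def using L(1) by auto
      then show "search_tree E (tset t) t" using gst gt by simp
    qed
  qed
  have "centroid_tree U E w (Node c ts)"
    unfolding centroid_tree_def
  proof (intro conjI ballI)
    show "search_tree E U (Node c ts)" by (fact st)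
    fix s assume "s \<in> subtrees (Node c ts)"
    then have "s = Node c ts \<or> (\<exists>t\<in>set ts. s \<in> subtrees t)" by auto
    then show "is_centroid E (tset s) w (root s)"
    proof
      assume "s = Node c ts"
      then show ?thesis using c st_tset[OF st] by simp
    next
      assume "\<exists>t\<in>set ts. s \<in> subtrees t"
      then obtain K where "K \<in> ?Cs" "s \<in> subtrees (g K)" unfolding ts_def using L(1) by auto
      then show ?thesis using g unfolding centroid_tree_def by blast
    qed
  qed
  then show ?case by blast
qed

end

context sgraph
begin

lemma st_finite: "finite S \<Longrightarrow> finite {T. search_tree E S T}"
proof (induction "card S" arbitrary: S rule: less_induct)
  case less
  define A where "A = (\<Union>r\<in>S. \<Union>K\<in>comps E (S - {r}). {T. search_tree E K T})"
  have finA: "finite A"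
    unfolding A_def
  proof (rule finite_UN_I[OF less.prems])
    fix r assume r: "r \<in> S"
    show "finite (\<Union>K\<in>comps E (S - {r}). {T. search_tree E K T})"
    proof (rule finite_UN_I)
      show "finite (comps E (S - {r}))" using finite_comps less.prems by blast
      fix K assume K: "K \<in> comps E (S - {r})"
      have KS: "K \<subset> S" using comps_sub[OF K] r by blast
      have "finite K" using KS less.prems finite_subset by blast
      moreover have "card K < card S" using psubset_card_mono[OF less.prems KS] .
      ultimately show "finite {T. search_tree E K T}" using less.hyps by blast
    qed
  qed
  let ?L = "{ts. set ts \<subseteq> A \<and> length ts \<le> card (Pow S)}"
  have "{T. search_tree E S T} \<subseteq> (\<lambda>(r, ts). Node r ts) ` (S \<times> ?L)"
  proof
    fix T assume "T \<in> {T. search_tree E S T}"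
    then have st: "search_tree E S T" by simp
    obtain r ts where T: "T = Node r ts" by (cases T) auto
    have rS: "r \<in> S" using st_node(1)[OF st[unfolded T]] .
    have "set ts \<subseteq> A"
    proof
      fix t
      assume t: "t \<in> set ts"
      have tK: "tset t \<in> comps E (S - {r})" using st_node(3)[OF st[unfolded T]] t by auto
      have tst: "search_tree E (tset t) t" using st_node(4)[OF st[unfolded T] t] .
      show "t \<in> A" unfolding A_def
        by (rule UN_I[OF rS], rule UN_I[OF tK]) (simp add: tst)
    qed
    moreover have "length ts \<le> card (Pow S)"
    proof -
      have "length ts = card (comps E (S - {r}))"
        using distinct_card[OF st_node(2)[OF st[unfolded T]]] st_node(3)[OF st[unfolded T]] by simp
      also have "\<dots> \<le> card (Pow S)"
      proof (rule card_mono)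
        show "finite (Pow S)" using less.prems by simp
        show "comps E (S - {r}) \<subseteq> Pow S" using comps_sub[of _ "S - {r}"] by blast
      qed
      finally show ?thesis .
    qed
    ultimately have "(r, ts) \<in> S \<times> ?L" using rS by simp
    moreover have "T = (\<lambda>(r, ts). Node r ts) (r, ts)" using T by simp
    ultimately show "T \<in> (\<lambda>(r, ts). Node r ts) ` (S \<times> ?L)" by (rule rev_image_eqI)
  qed
  moreover have "finite ((\<lambda>(r, ts). Node r ts) ` (S \<times> ?L))"
    by (rule finite_imageI, rule finite_cartesian_product[OF less.prems finite_lists_length_le[OF finA]])
  ultimately show ?case by (rule finite_subset)
qed

end


context cproblem
begin

lemma all_claims: "U \<subseteq> V \<Longrightarrow> conn E U \<Longrightarrow> U \<noteq> {} \<Longrightarrow> ClaimP U \<and> BaseP U"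
proof (induction "card U" arbitrary: U rule: less_induct)
  case less
  have "ClaimP U"
  proof (rule claim_step[OF less.prems(1,2)])
    fix K assume "K \<subseteq> V" "conn E K" "K \<noteq> {}" "card K < card U"
    then show "ClaimP K \<and> BaseP K" using less.hyps by blast
  qed
  then show ?case using base_from_claim[OF less.prems] by blast
qed

lemma pcV: "pc V = cost w T"
proof -
  have "{y \<in> V. y \<in> ancs T x} = ancs T x" for x using ancs_sub[of T x] tsetT by blast
  then show ?thesis unfolding pc_def using cost_eq_ancs[OF stT, of w] by simp
qed

end

theorem theorem4:
  fixes V :: "'a set" and E :: "'a \<Rightarrow> 'a \<Rightarrow> bool" and w :: "'a \<Rightarrow> real"
  assumes "is_tree V E"
    and "\<forall>v\<in>V. w v \<ge> 0"
  shows "cent V E w \<le> (2 - 1 / 2 ^ max_degree V E) * OPT V E w"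
proof -
  have finV: "finite V" and neV: "V \<noteq> {}" and Ein: "\<And>u v. E u v \<Longrightarrow> u \<in> V \<and> v \<in> V"
    and symE: "\<And>u v. E u v \<Longrightarrow> E v u" and irr: "\<And>v. \<not> E v v"
    and cn: "\<forall>u\<in>V. \<forall>v\<in>V. E\<^sup>*\<^sup>* u v" and ced: "card {{u, v} | u v. E u v} = card V - 1"
    using assms(1) unfolding is_tree_def by blast+
  interpret sg: sgraph E by unfold_locales (rule symE)
  have connV: "conn E V" unfolding conn_def reach_def
  proof (intro ballI)
    fix u v assume "u \<in> V" "v \<in> V"
    then have "E\<^sup>*\<^sup>* u v" using cn by blast
    then show "(\<lambda>x y. x \<in> V \<and> y \<in> V \<and> E x y)\<^sup>*\<^sup>* u v"
    proof (rule rtranclp_mono[THEN predicate2D, rotated])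
      show "E \<le> (\<lambda>x y. x \<in> V \<and> y \<in> V \<and> E x y)" using Ein by auto
    qed
  qed
  have edq: "EdS E V = {{u, v} | u v. E u v}" unfolding EdS_def using Ein by blast
  interpret tg: tgraph E V
    by (rule tgraph.intro[OF sg.sgraph_axioms], unfold_locales)
       (use finV Ein irr connV ced edq in auto)
  let ?ST = "{T. search_tree E V T}"
  let ?CT = "{T. centroid_tree V E w T}"
  have finST: "finite ?ST" using sg.st_finite[OF finV] .
  have CTST: "?CT \<subseteq> ?ST" unfolding centroid_tree_def by blast
  then have finCT: "finite ?CT" using finST finite_subset by blast
  obtain C0 where C0: "centroid_tree V E w C0" using tg.ct_exists[OF connV subset_refl neV assms(2)] by blast
  have neCT: "cost w ` ?CT \<noteq> {}" using C0 by blast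
  have neST: "cost w ` ?ST \<noteq> {}" using C0 CTST by blast
  have "cent V E w \<in> cost w ` ?CT" unfolding cent_def using Max_in[OF finite_imageI[OF finCT] neCT] .
  then obtain C1 where C1: "centroid_tree V E w C1" "cent V E w = cost w C1" by blast
  have "OPT V E w \<in> cost w ` ?ST" unfolding OPT_def using Min_in[OF finite_imageI[OF finST] neST] .
  then obtain T0 where T0: "search_tree E V T0" "OPT V E w = cost w T0" by blast
  interpret cp: cproblem E V w T0 "max_degree V E"
  proof (rule cproblem.intro[OF sg.sgraph_axioms], unfold_locales)
    show "finite V" by (fact finV)
    show "\<And>x. x \<in> V \<Longrightarrow> 0 \<le> w x" using assms(2) by blast
    show "search_tree E V T0" by (fact T0(1))
    fix v assume "v \<in> V"
    then show "card {u \<in> V. E v u} \<le> max_degree V E"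
      unfolding max_degree_def using finV by (intro Max_ge) auto
  qed
  have "cp.BaseP V" using cp.all_claims[OF subset_refl connV neV] by blast
  then have "cost w C1 \<le> aa (max_degree V E) * cp.pc V" using cp.BasePD C1(1) by blast
  then show ?thesis using C1(2) T0(2) cp.pcV unfolding aa_def by simp
qed


end
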